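(* Let $N\ge1$, $\beta>0$, $\mu>0$, and consider the Markovian SIR epidemic $\{(S_t,I_t)\}_{t\ge0}$ killed at $\hat\tau=\inf\{t>0: I_t\le1,\ S_t\le N-1\}$ (first return to level $i\le1$ after leaving $(N,1)$), with transient set $\hat S=\{(N,1)\}\cup\{(s,i)\in\mathbb{Z}^2:0\le s\le N,\ 2\le i\le N+1-s\}$. Then there exists a quasi-stationary distribution $\hat\nu$ on $\hat S$ for this killed process with $\hat\nu(N,1)>0$ (a non-trivial QSD) if and only if $\mu>\beta N$. In that case $\hat\nu$ is the unique QSD charging $(N,1)$, $\hat\nu(s,i)>0$ for every $(s,i)\in\hat S$, and $$\lim_{t\to\infty}P_{(N,1)}(S_t=s,\,I_t=i\mid\hat\tau>t)=\hat\nu(s,i),\quad (s,i)\in\hat S.$$ Moreover, for any probability distribution $\rho$ on $\hat S$ with $\rho(N,1)=0$, $\lim_{t\to\infty}P_\rho(S_t=s,\,I_t=i\mid\hat\tau>t)=\delta_{(0,2)}(s,i)$.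
   Context: SIR model: population of size $N+1$; $S_t$, $I_t$ are the numbers of susceptible and infected individuals. It is the continuous-time Markov chain on $\{(s,i)\in\mathbb{Z}^2:0\le s\le N,\ 0\le i\le N+1-s\}$ with transitions from $(S,I)$: $(S-1,I+1)$ at rate $\beta SI$ and $(S,I-1)$ at rate $\mu I$ (total rate $I(\beta S+\mu)$). A QSD for the killed process is a probability measure $\nu$ on $\hat S$ with $P_\nu((S_t,I_t)\in A\mid\hat\tau>t)=\nu(A)$ for all $t\ge0$, $A\subset\hat S$. *)

theory Defs
  imports Complex_Main
begin

definition SIR_hat :: "nat \<Rightarrow> (nat \<times> nat) set" where
  "SIR_hat N = {(N, 1)} \<union> {(s, i). s \<le> N \<and> 2 \<le> i \<and> i \<le> N + 1 - s}"

definition sir_rate :: "real \<Rightarrow> real \<Rightarrow> nat \<times> nat \<Rightarrow> nat \<times> nat \<Rightarrow> real" where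
  "sir_rate \<beta> \<mu> x y =
     (if 1 \<le> fst x \<and> y = (fst x - 1, snd x + 1) then \<beta> * real (fst x) * real (snd x)
      else if 1 \<le> snd x \<and> y = (fst x, snd x - 1) then \<mu> * real (snd x)
      else 0)"

definition sir_out :: "real \<Rightarrow> real \<Rightarrow> nat \<times> nat \<Rightarrow> real" where
  "sir_out \<beta> \<mu> x = real (snd x) * (\<beta> * real (fst x) + \<mu>)"

text \<open>Uniformization constant (strictly dominates all exit rates on the state space).\<close>
definition unif_rate :: "nat \<Rightarrow> real \<Rightarrow> real \<Rightarrow> real" where
  "unif_rate N \<beta> \<mu> = (\<beta> + \<mu>) * (real N + 1) ^ 2 + 1"

text \<open>Uniformized sub-stochastic kernel  I + Q/lambda  of the killed chain on SIR_hat N,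
  where Q is the sub-generator (rates restricted to SIR_hat N, diagonal = minus total exit rate).\<close>
definition unif_kernel :: "nat \<Rightarrow> real \<Rightarrow> real \<Rightarrow> nat \<times> nat \<Rightarrow> nat \<times> nat \<Rightarrow> real" where
  "unif_kernel N \<beta> \<mu> x y =
     (if x = y then 1 - sir_out \<beta> \<mu> x / unif_rate N \<beta> \<mu> else 0)
     + sir_rate \<beta> \<mu> x y / unif_rate N \<beta> \<mu>"

fun kpow :: "nat \<Rightarrow> real \<Rightarrow> real \<Rightarrow> nat \<Rightarrow> nat \<times> nat \<Rightarrow> nat \<times> nat \<Rightarrow> real" where
  "kpow N \<beta> \<mu> 0 x y = (if x = y then 1 else 0)"
| "kpow N \<beta> \<mu> (Suc n) x y = (\<Sum>z\<in>SIR_hat N. unif_kernel N \<beta> \<mu> x z * kpow N \<beta> \<mu> n z y)"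

text \<open>Transition function of the killed process:
  killed_trans t x y = P_x((S_t,I_t) = y, tau > t) = exp(t Q)(x,y), via uniformization.\<close>
definition killed_trans :: "nat \<Rightarrow> real \<Rightarrow> real \<Rightarrow> real \<Rightarrow> nat \<times> nat \<Rightarrow> nat \<times> nat \<Rightarrow> real" where
  "killed_trans N \<beta> \<mu> t x y =
     (\<Sum>n. exp (- unif_rate N \<beta> \<mu> * t) * (unif_rate N \<beta> \<mu> * t) ^ n / fact n * kpow N \<beta> \<mu> n x y)"

definition surv_prob :: "nat \<Rightarrow> real \<Rightarrow> real \<Rightarrow> (nat \<times> nat \<Rightarrow> real) \<Rightarrow> real \<Rightarrow> (nat \<times> nat) set \<Rightarrow> real" where
  "surv_prob N \<beta> \<mu> \<rho> t A =
     (\<Sum>x\<in>SIR_hat N. \<rho> x * (\<Sum>y\<in>A. killed_trans N \<beta> \<mu> t x y))"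

definition cond_prob :: "nat \<Rightarrow> real \<Rightarrow> real \<Rightarrow> (nat \<times> nat \<Rightarrow> real) \<Rightarrow> real \<Rightarrow> (nat \<times> nat) set \<Rightarrow> real" where
  "cond_prob N \<beta> \<mu> \<rho> t A = surv_prob N \<beta> \<mu> \<rho> t A / surv_prob N \<beta> \<mu> \<rho> t (SIR_hat N)"

definition prob_on :: "nat \<Rightarrow> (nat \<times> nat \<Rightarrow> real) \<Rightarrow> bool" where
  "prob_on N \<rho> \<longleftrightarrow> (\<forall>x. 0 \<le> \<rho> x) \<and> (\<forall>x. x \<notin> SIR_hat N \<longrightarrow> \<rho> x = 0)
                     \<and> sum \<rho> (SIR_hat N) = 1"

definition is_QSD :: "nat \<Rightarrow> real \<Rightarrow> real \<Rightarrow> (nat \<times> nat \<Rightarrow> real) \<Rightarrow> bool" where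
  "is_QSD N \<beta> \<mu> \<nu> \<longleftrightarrow> prob_on N \<nu> \<and>
     (\<forall>t\<ge>0. \<forall>A\<subseteq>SIR_hat N. cond_prob N \<beta> \<mu> \<nu> t A = sum \<nu> A)"

definition dirac_at :: "nat \<times> nat \<Rightarrow> nat \<times> nat \<Rightarrow> real" where
  "dirac_at a x = (if x = a then 1 else 0)"

end

theory Submission
  imports Defs
begin

lemma ps_coeff1:
  fixes a :: "nat \<Rightarrow> real"
  assumes sm: "\<And>u. summable (\<lambda>n. a n * u ^ n)" and z: "\<And>u. 0 < u \<Longrightarrow> (\<Sum>n. a n * u ^ n) = 0"
    and a0: "a 0 = 0"
  shows "a 1 = 0"
proof -
  define g where "g = (\<lambda>u::real. \<Sum>n. a (Suc n) * u ^ n)"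
  have g0: "g u = 0" if u: "0 < u" for u
  proof -
    have "g u * u = (\<Sum>n. a n * u ^ n) - a 0" unfolding g_def by (rule powser_split_head(2)[OF sm])
    hence "g u * u = 0" using z[OF u] a0 by simp
    thus "g u = 0" using u by simp
  qed
  have sm1: "summable (\<lambda>n. a (Suc n) * 1 ^ n)" by (rule powser_split_head(3)[OF sm])
  have "isCont g 0" unfolding g_def by (rule isCont_powser[OF sm1]) simp
  hence "(g \<longlongrightarrow> g 0) (at 0)" by (simp add: isCont_def)
  hence l1: "(g \<longlongrightarrow> g 0) (at_right 0)" by (rule tendsto_mono[rotated]) (rule at_le, simp)
  have "eventually (\<lambda>u. g u = 0) (at_right (0::real))"
    using eventually_at_right_less[of "0::real"] by eventually_elim (rule g0)
  hence l2: "(g \<longlongrightarrow> 0) (at_right 0)" by (rule tendsto_eventually)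
  have "g 0 = 0" using tendsto_unique[OF trivial_limit_at_right_real l1 l2] .
  thus ?thesis unfolding g_def by simp
qed

locale sir =
  fixes N :: nat and b m :: real
  assumes N1: "1 \<le> N" and bpos: "0 < b" and mpos: "0 < m"
begin

abbreviation "H \<equiv> SIR_hat N"
abbreviation "L \<equiv> unif_rate N b m"
abbreviation "P \<equiv> unif_kernel N b m"
abbreviation "Kp \<equiv> kpow N b m"
abbreviation "Kt \<equiv> killed_trans N b m"
abbreviation "th \<equiv> sir_out b m"

definition phi :: "nat \<times> nat \<Rightarrow> nat" where "phi x = 2 * fst x + snd x"
definition pw :: "real \<Rightarrow> nat \<Rightarrow> real" where "pw t n = exp (- L * t) * (L * t) ^ n / fact n"

lemma finH: "finite H"
proof -
  have "H \<subseteq> {0..N} \<times> {0..N+1}" unfolding SIR_hat_def by auto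
  thus ?thesis by (rule finite_subset) auto
qed

lemma memH: assumes "(s,i) \<in> H"
  shows "s \<le> N" "1 \<le> i" "i \<le> N + 1" "2*s+i \<le> 2*N+1"
    "(s,i) \<noteq> (N,1) \<Longrightarrow> 2 \<le> i \<and> s + i \<le> N + 1"
  using assms N1 unfolding SIR_hat_def by auto

lemma L_pos: "0 < L" unfolding unif_rate_def using bpos mpos
  by (simp add: add_pos_pos)

lemma th_nonneg: "0 \<le> th x" unfolding sir_out_def using bpos mpos by simp

lemma th_lt_L: assumes "x \<in> H" shows "th x < L"
proof -
  obtain s i where x: "x = (s,i)" by fastforce
  have s: "real s \<le> real N" and i: "real i \<le> real N + 1" using memH[of s i] assms x by auto
  have "real i * (b * real s + m) \<le> (real N + 1) * (b * real s + m)"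
    using i bpos mpos by (intro mult_right_mono) auto
  also have "\<dots> \<le> (real N + 1) * ((b + m) * (real N + 1))"
  proof (intro mult_left_mono)
    have "b * real s \<le> b * real N" using s bpos by (simp add: mult_left_mono)
    moreover have "0 \<le> m * real N" using mpos by simp
    moreover have "(b + m) * (real N + 1) = b * real N + m * real N + b + m" by (simp add: algebra_simps)
    ultimately show "b * real s + m \<le> (b + m) * (real N + 1)" using bpos by linarith
  qed simp
  also have "\<dots> = (b + m) * (real N + 1)^2" by (simp add: power2_eq_square)
  finally show ?thesis unfolding x sir_out_def unif_rate_def by simp
qed

lemma rate_nonneg: "0 \<le> sir_rate b m x y"
  unfolding sir_rate_def using bpos mpos by auto

lemma P_nonneg: assumes "x \<in> H" shows "0 \<le> P x y"
proof -
  have "th x / L \<le> 1" using th_lt_L[OF assms] L_pos by simp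
  thus ?thesis unfolding unif_kernel_def using rate_nonneg[of x y] L_pos by auto
qed

lemma rate_split:
  "sir_rate b m (s,i) y =
     (if y = (s-1,i+1) then (if 1 \<le> s then b * real s * real i else 0) else 0)
   + (if y = (s,i-1) then (if 1 \<le> i \<and> \<not> (1 \<le> s \<and> (s,i-1) = (s-1,i+1)) then m * real i else 0) else 0)"
  unfolding sir_rate_def by auto

lemma row_rate: assumes "finite A"
  shows "(\<Sum>y\<in>A. sir_rate b m (s,i) y * f y) =
     (if 1 \<le> s \<and> (s-1,i+1) \<in> A then b * real s * real i * f (s-1,i+1) else 0)
   + (if 1 \<le> i \<and> (s,i-1) \<in> A then m * real i * f (s,i-1) else 0)"
proof -
  have ne: "1 \<le> s \<Longrightarrow> (s,i-1) \<noteq> (s-1,i+1)" by auto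
  show ?thesis
    unfolding rate_split distrib_right sum.distrib
    by (simp add: if_distrib[of "\<lambda>z. z * f _"] sum.delta'[OF assms] sum.delta[OF assms] cong: if_cong)
qed

lemma rate_col_split:
  "sir_rate b m z (s,i) =
     (if z = (s+1,i-1) then (if 1 \<le> i then b * real (s+1) * real (i-1) else 0) else 0)
   + (if z = (s,i+1) then m * real (i+1) else 0)"
proof -
  obtain a c where z: "z = (a,c)" by fastforce
  show ?thesis unfolding z sir_rate_def by (cases "1 \<le> i") auto
qed

lemma col_rate: assumes "finite A"
  shows "(\<Sum>z\<in>A. f z * sir_rate b m z (s,i)) =
     (if 1 \<le> i \<and> (s+1,i-1) \<in> A then f (s+1,i-1) * (b * real (s+1) * real (i-1)) else 0)
   + (if (s,i+1) \<in> A then f (s,i+1) * (m * real (i+1)) else 0)"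
  unfolding rate_col_split distrib_left sum.distrib
  by (simp add: if_distrib[of "\<lambda>z. f _ * z"] sum.delta'[OF assms] sum.delta[OF assms] cong: if_cong)

lemma row_P: assumes "(s,i) \<in> H"
  shows "(\<Sum>y\<in>H. P (s,i) y * f y) = (1 - th (s,i) / L) * f (s,i) +
     ((if 1 \<le> s \<and> (s-1,i+1) \<in> H then b * real s * real i * f (s-1,i+1) else 0)
   + (if 1 \<le> i \<and> (s,i-1) \<in> H then m * real i * f (s,i-1) else 0)) / L"
proof -
  have "(\<Sum>y\<in>H. P (s,i) y * f y) = (\<Sum>y\<in>H. (if (s,i) = y then 1 - th (s,i) / L else 0) * f y)
      + (\<Sum>y\<in>H. sir_rate b m (s,i) y * f y) / L"
    unfolding unif_kernel_def distrib_right sum.distrib sum_divide_distrib by (simp add: field_simps)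
  also have "(\<Sum>y\<in>H. (if (s,i) = y then 1 - th (s,i) / L else 0) * f y) = (1 - th (s,i) / L) * f (s,i)"
    using assms finH by (simp add: if_distrib[of "\<lambda>z. z * f _"] cong: if_cong)
  finally show ?thesis using row_rate[OF finH] by simp
qed

lemma col_P: assumes "(s,i) \<in> H"
  shows "(\<Sum>x\<in>H. f x * P x (s,i)) = f (s,i) * (1 - th (s,i) / L) +
     ((if 1 \<le> i \<and> (s+1,i-1) \<in> H then f (s+1,i-1) * (b * real (s+1) * real (i-1)) else 0)
   + (if (s,i+1) \<in> H then f (s,i+1) * (m * real (i+1)) else 0)) / L"
proof -
  have "(\<Sum>x\<in>H. f x * P x (s,i)) = (\<Sum>x\<in>H. f x * (if x = (s,i) then 1 - th x / L else 0))
      + (\<Sum>x\<in>H. f x * sir_rate b m x (s,i)) / L"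
    unfolding unif_kernel_def distrib_left sum.distrib sum_divide_distrib by (simp add: field_simps)
  also have "(\<Sum>x\<in>H. f x * (if x = (s,i) then 1 - th x / L else 0)) = (\<Sum>x\<in>H. (if x = (s,i) then f (s,i) * (1 - th (s,i) / L) else 0))"
    by (rule sum.cong) auto
  also have "\<dots> = f (s,i) * (1 - th (s,i) / L)"
    using assms finH by simp
  finally show ?thesis using col_rate[OF finH] by simp
qed

lemma P_N1: assumes "x \<in> H" "x \<noteq> (N,1)" shows "P x (N,1) = 0"
proof -
  obtain s i where x: "x = (s,i)" by fastforce
  have h: "2 \<le> i" "s + i \<le> N + 1" using memH(5)[of s i] assms x by auto
  have "sir_rate b m (s,i) (N,1) = 0"
    using h unfolding sir_rate_def by auto
  thus ?thesis using assms unfolding x unif_kernel_def by auto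
qed

lemma Kp_out: "x \<in> H \<Longrightarrow> y \<notin> H \<Longrightarrow> Kp n x y = 0"
proof (induction n arbitrary: x)
  case 0 thus ?case by auto
next
  case (Suc n)
  have "Kp (Suc n) x y = (\<Sum>z\<in>H. P x z * Kp n z y)" by simp
  also have "\<dots> = 0" using Suc.IH Suc.prems by (intro sum.neutral) simp
  finally show ?case .
qed

lemma Kp_nonneg: "x \<in> H \<Longrightarrow> 0 \<le> Kp n x y"
proof (induction n arbitrary: x)
  case 0 thus ?case by auto
next
  case (Suc n)
  have "Kp (Suc n) x y = (\<Sum>z\<in>H. P x z * Kp n z y)" by simp
  also have "0 \<le> \<dots>" using Suc.IH Suc.prems P_nonneg by (intro sum_nonneg mult_nonneg_nonneg) simp_all
  finally show ?case .
qed

lemma Kp_N1: "x \<in> H \<Longrightarrow> x \<noteq> (N,1) \<Longrightarrow> Kp n x (N,1) = 0"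
proof (induction n arbitrary: x)
  case 0 thus ?case by auto
next
  case (Suc n)
  have "Kp (Suc n) x (N,1) = (\<Sum>z\<in>H. P x z * Kp n z (N,1))" by simp
  also have "\<dots> = 0"
  proof (intro sum.neutral ballI)
    fix z assume "z \<in> H" thus "P x z * Kp n z (N,1) = 0"
      using Suc.IH[of z] P_N1[OF Suc.prems] by (cases "z = (N,1)") simp_all
  qed
  finally show ?case .
qed

lemma Kp_step: "x \<in> H \<Longrightarrow> (\<Sum>y\<in>H. Kp (Suc n) x y * w y) = (\<Sum>z\<in>H. P x z * (\<Sum>y\<in>H. Kp n z y * w y))"
proof -
  have "(\<Sum>y\<in>H. Kp (Suc n) x y * w y) = (\<Sum>y\<in>H. \<Sum>z\<in>H. P x z * Kp n z y * w y)"
    by (simp add: sum_distrib_right)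
  also have "\<dots> = (\<Sum>z\<in>H. \<Sum>y\<in>H. P x z * Kp n z y * w y)" by (rule sum.swap)
  also have "\<dots> = (\<Sum>z\<in>H. P x z * (\<Sum>y\<in>H. Kp n z y * w y))"
    by (simp add: sum_distrib_left mult.assoc)
  finally show ?thesis .
qed

lemma Kp_upper:
  assumes D: "D \<subseteq> H" and cl: "\<And>x z. x \<in> D \<Longrightarrow> z \<in> H \<Longrightarrow> z \<notin> D \<Longrightarrow> P x z = 0"
    and q: "0 \<le> q" and hw: "\<And>x. x \<in> D \<Longrightarrow> (\<Sum>z\<in>H. P x z * w z) \<le> q * w x"
  shows "x \<in> D \<Longrightarrow> (\<Sum>y\<in>H. Kp n x y * w y) \<le> q ^ n * w x"
proof (induction n arbitrary: x)
  case 0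
  then show ?case using D finH by (auto simp: if_distrib[of "\<lambda>z. z * w _"] cong: if_cong)
next
  case (Suc n)
  have xH: "x \<in> H" using Suc D by auto
  have "(\<Sum>y\<in>H. Kp (Suc n) x y * w y) = (\<Sum>z\<in>H. P x z * (\<Sum>y\<in>H. Kp n z y * w y))"
    by (rule Kp_step[OF xH])
  also have "\<dots> \<le> (\<Sum>z\<in>H. P x z * (q ^ n * w z))"
  proof (rule sum_mono)
    fix z assume z: "z \<in> H"
    show "P x z * (\<Sum>y\<in>H. Kp n z y * w y) \<le> P x z * (q ^ n * w z)"
    proof (cases "z \<in> D")
      case True thus ?thesis using Suc.IH[of z] P_nonneg[OF xH] by (simp add: mult_left_mono)
    next
      case False thus ?thesis using cl[OF Suc.prems z] by simp
    qed
  qed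
  also have "\<dots> = q ^ n * (\<Sum>z\<in>H. P x z * w z)" by (simp add: sum_distrib_left algebra_simps)
  also have "\<dots> \<le> q ^ n * (q * w x)" using hw[OF Suc.prems] q by (simp add: mult_left_mono)
  finally show ?case by (simp add: ac_simps)
qed

lemma Kp_lower:
  assumes D: "D \<subseteq> H" and cl: "\<And>x z. x \<in> D \<Longrightarrow> z \<in> H \<Longrightarrow> z \<notin> D \<Longrightarrow> P x z = 0"
    and q: "0 \<le> q" and hw: "\<And>x. x \<in> D \<Longrightarrow> (\<Sum>z\<in>H. P x z * w z) \<ge> q * w x"
  shows "x \<in> D \<Longrightarrow> (\<Sum>y\<in>H. Kp n x y * w y) \<ge> q ^ n * w x"
proof (induction n arbitrary: x)
  case 0
  then show ?case using D finH by (auto simp: if_distrib[of "\<lambda>z. z * w _"] cong: if_cong)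
next
  case (Suc n)
  have xH: "x \<in> H" using Suc D by auto
  have "q ^ n * (q * w x) \<le> q ^ n * (\<Sum>z\<in>H. P x z * w z)" using hw[OF Suc.prems] q by (simp add: mult_left_mono)
  also have "\<dots> = (\<Sum>z\<in>H. P x z * (q ^ n * w z))" by (simp add: sum_distrib_left algebra_simps)
  also have "\<dots> \<le> (\<Sum>z\<in>H. P x z * (\<Sum>y\<in>H. Kp n z y * w y))"
  proof (rule sum_mono)
    fix z assume z: "z \<in> H"
    show "P x z * (q ^ n * w z) \<le> P x z * (\<Sum>y\<in>H. Kp n z y * w y)"
    proof (cases "z \<in> D")
      case True thus ?thesis using Suc.IH[of z] P_nonneg[OF xH] by (simp add: mult_left_mono)
    next
      case False thus ?thesis using cl[OF Suc.prems z] by simp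
    qed
  qed
  also have "\<dots> = (\<Sum>y\<in>H. Kp (Suc n) x y * w y)"
    by (rule Kp_step[OF xH, symmetric])
  finally show ?case by (simp add: ac_simps)
qed

lemma rowsum_rate_le: assumes "(s,i) \<in> H"
  shows "(if 1 \<le> s \<and> (s-1,i+1) \<in> H then b * real s * real i else 0)
   + (if 1 \<le> i \<and> (s,i-1) \<in> H then m * real i else 0) \<le> th (s,i)"
  using bpos mpos unfolding sir_out_def by (auto simp: algebra_simps)

lemma Kp_le1: assumes "x \<in> H" shows "Kp n x y \<le> 1"
proof -
  have "(\<Sum>y\<in>H. Kp n x y * 1) \<le> 1 ^ n * 1"
  proof (rule Kp_upper[of H])
    fix x assume x: "x \<in> H"
    obtain s i where xs: "x = (s,i)" by fastforce
    have "(\<Sum>z\<in>H. P x z * 1) = (1 - th x / L) + ((if 1 \<le> s \<and> (s-1,i+1) \<in> H then b * real s * real i else 0)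
   + (if 1 \<le> i \<and> (s,i-1) \<in> H then m * real i else 0)) / L"
      using row_P[of s i "\<lambda>_. 1"] x xs by simp
    also have "\<dots> \<le> (1 - th x / L) + th x / L"
      using rowsum_rate_le[of s i] x xs L_pos by (intro add_left_mono divide_right_mono) auto
    finally show "(\<Sum>z\<in>H. P x z * 1) \<le> 1 * 1" by simp
  qed (use assms in auto)
  hence sH: "(\<Sum>y\<in>H. Kp n x y) \<le> 1" by simp
  show ?thesis
  proof (cases "y \<in> H")
    case True
    have "Kp n x y \<le> (\<Sum>y\<in>H. Kp n x y)"
      by (rule member_le_sum) (use True Kp_nonneg assms finH in auto)
    thus ?thesis using sH by simp
  qed (use Kp_out assms in simp)
qed


lemma pw_nonneg: "0 \<le> t \<Longrightarrow> 0 \<le> pw t n"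
  unfolding pw_def using L_pos by simp

lemma pw_sums: "(\<lambda>n. pw t n * q ^ n) sums (exp (- L * t) * exp (L * t * q))"
proof -
  have "(\<lambda>n. exp (- L * t) * ((L * t * q) ^ n /\<^sub>R fact n)) sums (exp (- L * t) * exp (L * t * q))"
    by (rule sums_mult[OF exp_converges])
  moreover have "(\<lambda>n. exp (- L * t) * ((L * t * q) ^ n /\<^sub>R fact n)) = (\<lambda>n. pw t n * q ^ n)"
    by (rule ext) (simp add: pw_def power_mult_distrib divide_inverse)
  ultimately show ?thesis by simp
qed

lemma pw_summable: assumes t: "0 \<le> t" and c: "\<And>n. \<bar>c n\<bar> \<le> C"
  shows "summable (\<lambda>n. pw t n * c n)"
proof (rule summable_comparison_test)
  show "\<exists>N0. \<forall>n\<ge>N0. norm (pw t n * c n) \<le> C * (pw t n * 1 ^ n)"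
  proof (intro exI allI impI)
    fix n :: nat
    have p: "0 \<le> pw t n" by (rule pw_nonneg[OF t])
    have "norm (pw t n * c n) = pw t n * \<bar>c n\<bar>" using p by (simp add: abs_mult)
    also have "\<dots> \<le> pw t n * C" using p c[of n] by (rule mult_left_mono[rotated])
    finally show "norm (pw t n * c n) \<le> C * (pw t n * 1 ^ n)" by (simp add: mult.commute)
  qed
  show "summable (\<lambda>n. C * (pw t n * 1 ^ n))"
    by (rule summable_mult, rule sums_summable, rule pw_sums)
qed

lemma Kt_eq: "Kt t x y = (\<Sum>n. pw t n * Kp n x y)"
  unfolding killed_trans_def pw_def ..

lemma Kp_abs: "x \<in> H \<Longrightarrow> \<bar>Kp n x y\<bar> \<le> 1"
  using Kp_nonneg Kp_le1 by simp

lemma Kp_summ: "0 \<le> t \<Longrightarrow> x \<in> H \<Longrightarrow> summable (\<lambda>n. pw t n * Kp n x y)"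
  by (rule pw_summable[where C=1]) (simp_all add: Kp_abs)

lemma Kt_nonneg: "0 \<le> t \<Longrightarrow> x \<in> H \<Longrightarrow> 0 \<le> Kt t x y"
  unfolding Kt_eq by (intro suminf_nonneg Kp_summ mult_nonneg_nonneg pw_nonneg Kp_nonneg)

lemma Kt_out: "x \<in> H \<Longrightarrow> y \<notin> H \<Longrightarrow> Kt t x y = 0"
  unfolding Kt_eq using Kp_out by simp

lemma Kt_N1: "x \<in> H \<Longrightarrow> x \<noteq> (N,1) \<Longrightarrow> Kt t x (N,1) = 0"
  unfolding Kt_eq using Kp_N1 by simp

lemma Kt_row: assumes t: "0 \<le> t" and x: "x \<in> H"
  shows "(\<Sum>y\<in>H. Kt t x y * f y) = (\<Sum>n. pw t n * (\<Sum>y\<in>H. Kp n x y * f y))"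
proof -
  have "(\<Sum>y\<in>H. Kt t x y * f y) = (\<Sum>y\<in>H. \<Sum>n. pw t n * Kp n x y * f y)"
    unfolding Kt_eq by (intro sum.cong refl suminf_mult2 Kp_summ t x)
  also have "\<dots> = (\<Sum>n. \<Sum>y\<in>H. pw t n * Kp n x y * f y)"
    by (rule suminf_sum[symmetric]) (intro summable_mult2 Kp_summ t x)
  also have "\<dots> = (\<Sum>n. pw t n * (\<Sum>y\<in>H. Kp n x y * f y))"
    by (simp add: sum_distrib_left mult.assoc)
  finally show ?thesis .
qed

lemma Kt_col: assumes t: "0 \<le> t"
  shows "(\<Sum>x\<in>H. v x * Kt t x y) = (\<Sum>n. pw t n * (\<Sum>x\<in>H. v x * Kp n x y))"
proof -
  have "(\<Sum>x\<in>H. v x * Kt t x y) = (\<Sum>x\<in>H. \<Sum>n. v x * (pw t n * Kp n x y))"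
    unfolding Kt_eq by (intro sum.cong refl suminf_mult[symmetric] Kp_summ t) 
  also have "\<dots> = (\<Sum>n. \<Sum>x\<in>H. v x * (pw t n * Kp n x y))"
    by (rule suminf_sum[symmetric]) (intro summable_mult Kp_summ t)
  also have "\<dots> = (\<Sum>n. pw t n * (\<Sum>x\<in>H. v x * Kp n x y))"
    by (simp add: sum_distrib_left ac_simps)
  finally show ?thesis .
qed

lemma sumKp_bound: assumes x: "x \<in> H" shows "\<bar>\<Sum>y\<in>H. Kp n x y * f y\<bar> \<le> (\<Sum>y\<in>H. \<bar>f y\<bar>)"
proof -
  have "\<bar>\<Sum>y\<in>H. Kp n x y * f y\<bar> \<le> (\<Sum>y\<in>H. \<bar>Kp n x y * f y\<bar>)" by (rule sum_abs)
  also have "\<dots> \<le> (\<Sum>y\<in>H. \<bar>f y\<bar>)"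
  proof (rule sum_mono)
    fix y show "\<bar>Kp n x y * f y\<bar> \<le> \<bar>f y\<bar>"
      using Kp_abs[OF x, of n y] by (simp add: abs_mult mult_left_le_one_le)
  qed
  finally show ?thesis .
qed

lemma Kt_upper:
  assumes D: "D \<subseteq> H" and cl: "\<And>x z. x \<in> D \<Longrightarrow> z \<in> H \<Longrightarrow> z \<notin> D \<Longrightarrow> P x z = 0"
    and q: "0 \<le> q" and hw: "\<And>x. x \<in> D \<Longrightarrow> (\<Sum>z\<in>H. P x z * w z) \<le> q * w x"
    and t: "0 \<le> t" and x: "x \<in> D"
  shows "(\<Sum>y\<in>H. Kt t x y * w y) \<le> exp (- L * t) * exp (L * t * q) * w x"
proof -
  have xH: "x \<in> H" using x D by auto
  have "(\<Sum>y\<in>H. Kt t x y * w y) = (\<Sum>n. pw t n * (\<Sum>y\<in>H. Kp n x y * w y))" by (rule Kt_row[OF t xH])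
  also have "\<dots> \<le> (\<Sum>n. pw t n * q ^ n * w x)"
  proof (rule suminf_le)
    show "summable (\<lambda>n. pw t n * (\<Sum>y\<in>H. Kp n x y * w y))"
      by (rule pw_summable[OF t sumKp_bound[OF xH]])
    show "summable (\<lambda>n. pw t n * q ^ n * w x)" by (intro summable_mult2 sums_summable[OF pw_sums])
    fix n show "pw t n * (\<Sum>y\<in>H. Kp n x y * w y) \<le> pw t n * q ^ n * w x"
      using Kp_upper[OF D cl q hw x, of n] pw_nonneg[OF t, of n] by (simp add: mult_left_mono mult.assoc)
  qed
  also have "\<dots> = exp (- L * t) * exp (L * t * q) * w x"
    by (rule sums_unique[symmetric], rule sums_mult2, rule pw_sums)
  finally show ?thesis .
qed

lemma Kt_lower:
  assumes D: "D \<subseteq> H" and cl: "\<And>x z. x \<in> D \<Longrightarrow> z \<in> H \<Longrightarrow> z \<notin> D \<Longrightarrow> P x z = 0"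
    and q: "0 \<le> q" and hw: "\<And>x. x \<in> D \<Longrightarrow> (\<Sum>z\<in>H. P x z * w z) \<ge> q * w x"
    and t: "0 \<le> t" and x: "x \<in> D"
  shows "(\<Sum>y\<in>H. Kt t x y * w y) \<ge> exp (- L * t) * exp (L * t * q) * w x"
proof -
  have xH: "x \<in> H" using x D by auto
  have "exp (- L * t) * exp (L * t * q) * w x = (\<Sum>n. pw t n * q ^ n * w x)"
    by (rule sums_unique, rule sums_mult2, rule pw_sums)
  also have "\<dots> \<le> (\<Sum>n. pw t n * (\<Sum>y\<in>H. Kp n x y * w y))"
  proof (rule suminf_le)
    show "summable (\<lambda>n. pw t n * (\<Sum>y\<in>H. Kp n x y * w y))"
      by (rule pw_summable[OF t sumKp_bound[OF xH]])
    show "summable (\<lambda>n. pw t n * q ^ n * w x)" by (intro summable_mult2 sums_summable[OF pw_sums])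
    fix n show "pw t n * q ^ n * w x \<le> pw t n * (\<Sum>y\<in>H. Kp n x y * w y)"
      using Kp_lower[OF D cl q hw x, of n] pw_nonneg[OF t, of n] by (simp add: mult_left_mono mult.assoc)
  qed
  also have "\<dots> = (\<Sum>y\<in>H. Kt t x y * w y)" by (rule Kt_row[OF t xH, symmetric])
  finally show ?thesis .
qed


definition th0 :: real where "th0 = th (N,1)"

lemma th0_eq: "th0 = b * real N + m" unfolding th0_def sir_out_def by simp

definition infl :: "(nat \<times> nat \<Rightarrow> real) \<Rightarrow> nat \<times> nat \<Rightarrow> real" where
  "infl v y = (case y of (s,i) \<Rightarrow>
     (if 1 \<le> i \<and> (s+1,i-1) \<in> H then v (s+1,i-1) * (b * real (s+1) * real (i-1)) else 0)
   + (if (s,i+1) \<in> H then v (s,i+1) * (m * real (i+1)) else 0))"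

lemma N1_H: "(N,1) \<in> H" unfolding SIR_hat_def by simp

lemma infl_N1: "infl v (N,1) = 0"
  unfolding infl_def SIR_hat_def by auto

lemma col_P': "y \<in> H \<Longrightarrow> (\<Sum>x\<in>H. v x * P x y) = v y * (1 - th y / L) + infl v y / L"
  using col_P by (cases y) (simp add: infl_def)

lemma eigen_of_infl:
  assumes "\<And>y. y \<in> H \<Longrightarrow> y \<noteq> (N,1) \<Longrightarrow> infl v y = (th y - th0) * v y" and "y \<in> H"
  shows "(\<Sum>x\<in>H. v x * P x y) = (1 - th0 / L) * v y"
proof (cases "y = (N,1)")
  case True thus ?thesis using col_P'[OF assms(2), of v] infl_N1 by (simp add: th0_def algebra_simps)
next
  case False
  have "(\<Sum>x\<in>H. v x * P x y) = v y * (1 - th y / L) + (th y - th0) * v y / L"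
    using col_P'[OF assms(2), of v] assms(1)[OF assms(2) False] by simp
  also have "\<dots> = (1 - th0 / L) * v y" using L_pos by (simp add: field_simps)
  finally show ?thesis .
qed

lemma infl_of_eigen:
  assumes "(\<Sum>x\<in>H. v x * P x y) = (1 - th0 / L) * v y" and "y \<in> H"
  shows "infl v y = (th y - th0) * v y"
proof -
  have "v y * (1 - th y / L) + infl v y / L = (1 - th0 / L) * v y"
    using col_P'[OF assms(2), of v] assms(1) by simp
  hence "L * (v y * (1 - th y / L) + infl v y / L) = L * ((1 - th0 / L) * v y)" by simp
  hence "L * (infl v y - (th y - th0) * v y) = 0" using L_pos by (simp add: field_simps)
  thus ?thesis using L_pos by simp
qed

lemma left_iter:
  assumes ev: "\<And>z. z \<in> H \<Longrightarrow> (\<Sum>x\<in>H. v x * P x z) = p * v z" and y: "y \<in> H"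
  shows "(\<Sum>x\<in>H. v x * Kp n x y) = p ^ n * v y"
proof (induction n)
  case 0 thus ?case using y finH by (simp add: if_distrib[of "\<lambda>z. _ * z"] cong: if_cong)
next
  case (Suc n)
  have "(\<Sum>x\<in>H. v x * Kp (Suc n) x y) = (\<Sum>x\<in>H. \<Sum>z\<in>H. v x * P x z * Kp n z y)"
    by (simp add: sum_distrib_left mult.assoc)
  also have "\<dots> = (\<Sum>z\<in>H. \<Sum>x\<in>H. v x * P x z * Kp n z y)" by (rule sum.swap)
  also have "\<dots> = (\<Sum>z\<in>H. (\<Sum>x\<in>H. v x * P x z) * Kp n z y)" by (simp add: sum_distrib_right)
  also have "\<dots> = (\<Sum>z\<in>H. p * (v z * Kp n z y))" by (intro sum.cong refl) (simp add: ev)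
  also have "\<dots> = p * p ^ n * v y" using Suc by (simp add: sum_distrib_left[symmetric])
  finally show ?case by simp
qed

lemma Kt_left_eigen:
  assumes ev: "\<And>z. z \<in> H \<Longrightarrow> (\<Sum>x\<in>H. v x * P x z) = p * v z" and y: "y \<in> H" and t: "0 \<le> t"
  shows "(\<Sum>x\<in>H. v x * Kt t x y) = exp (- L * t) * exp (L * t * p) * v y"
proof -
  have "(\<Sum>x\<in>H. v x * Kt t x y) = (\<Sum>n. pw t n * p ^ n * v y)"
    by (subst Kt_col[OF t]) (simp add: left_iter[OF ev y] mult.assoc)
  also have "\<dots> = exp (- L * t) * exp (L * t * p) * v y"
    by (rule sums_unique[symmetric], rule sums_mult2, rule pw_sums)
  finally show ?thesis .
qed

function hv :: "nat \<times> nat \<Rightarrow> real" where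
  "hv (s,i) = (if (s,i) = (N,1) then 1 else if (s,i) \<notin> H then 0 else
     ((if 1 \<le> i \<and> (s+1,i-1) \<in> H then hv (s+1,i-1) * (b * real (s+1) * real (i-1)) else 0)
    + (if (s,i+1) \<in> H then hv (s,i+1) * (m * real (i+1)) else 0)) / (th (s,i) - th0))"
  by pat_completeness auto
termination
proof (relation "measure (\<lambda>(s,i). 2*N+2 - (2*s+i))")
  show "wf (measure (\<lambda>(s,i). 2*N+2 - (2*s+i)))" by simp
next
  fix s i assume a: "\<not> (s,i) = (N,1)" "\<not> (s,i) \<notin> H" "1 \<le> i \<and> (s+1,i-1) \<in> H"
  have "2*(s+1)+(i-1) \<le> 2*N+1" using memH(4)[of "s+1" "i-1"] a by auto
  thus "((s+1,i-1),(s,i)) \<in> measure (\<lambda>(s,i). 2*N+2 - (2*s+i))" using a by auto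
next
  fix s i assume a: "\<not> (s,i) = (N,1)" "\<not> (s,i) \<notin> H" "(s,i+1) \<in> H"
  have "2*s+(i+1) \<le> 2*N+1" using memH(4)[of s "i+1"] a by auto
  thus "((s,i+1),(s,i)) \<in> measure (\<lambda>(s,i). 2*N+2 - (2*s+i))" by auto
qed

declare hv.simps[simp del]

lemma hv_eq: assumes "(s,i) \<in> H" "(s,i) \<noteq> (N,1)" shows "hv (s,i) = infl hv (s,i) / (th (s,i) - th0)"
  using assms by (subst hv.simps) (auto simp: infl_def)

lemma hv_N1: "hv (N,1) = 1" by (simp add: hv.simps)
lemma hv_out: "y \<notin> H \<Longrightarrow> hv y = 0" using N1_H by (cases y) (auto simp: hv.simps)

lemma th_ge: assumes "(s,i) \<in> H" "(s,i) \<noteq> (N,1)" shows "2 * m \<le> th (s,i)"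
proof -
  have i: "2 \<le> i" using memH(5)[OF assms(1)] assms(2) by auto
  have "2 * m \<le> real i * m" using i mpos by (intro mult_right_mono) auto
  also have "\<dots> \<le> real i * (b * real s + m)" using bpos by (intro mult_left_mono) auto
  finally show ?thesis unfolding sir_out_def by simp
qed

lemma infl_pos:
  assumes y: "(s,i) \<in> H" "(s,i) \<noteq> (N,1)"
    and u1: "1 \<le> i \<and> (s+1,i-1) \<in> H \<Longrightarrow> 0 < v (s+1,i-1)"
    and u2: "(s,i+1) \<in> H \<Longrightarrow> 0 < v (s,i+1)"
  shows "0 < infl v (s,i)"
proof -
  have h: "2 \<le> i" "s + i \<le> N + 1" "s \<le> N" using memH[OF y(1)] y(2) by auto
  have t1: "0 \<le> (if 1 \<le> i \<and> (s+1,i-1) \<in> H then v (s+1,i-1) * (b * real (s+1) * real (i-1)) else 0)"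
    using u1 bpos by (simp add: less_imp_le)
  have t2: "0 \<le> (if (s,i+1) \<in> H then v (s,i+1) * (m * real (i+1)) else 0)"
    using u2 mpos by (simp add: less_imp_le)
  show ?thesis
  proof (cases "s + i \<le> N")
    case True
    hence "(s,i+1) \<in> H" using h unfolding SIR_hat_def by auto
    hence "0 < (if (s,i+1) \<in> H then v (s,i+1) * (m * real (i+1)) else 0)"
      using u2 mpos by simp
    thus ?thesis using t1 unfolding infl_def by simp
  next
    case False
    hence "(s+1,i-1) \<in> H" using h unfolding SIR_hat_def by auto
    hence "0 < (if 1 \<le> i \<and> (s+1,i-1) \<in> H then v (s+1,i-1) * (b * real (s+1) * real (i-1)) else 0)"
      using u1 bpos h by simp
    thus ?thesis using t2 unfolding infl_def by simp
  qed
qed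

lemma hv_pos: assumes mb: "b * real N < m"
  shows "(s,i) \<in> H \<Longrightarrow> 0 < hv (s,i)" and "0 \<le> hv (s,i)"
proof -
  have "((s,i) \<in> H \<longrightarrow> 0 < hv (s,i)) \<and> 0 \<le> hv (s,i)"
  proof (induction "(s,i)" arbitrary: s i rule: hv.induct)
    case (1 s i)
    show ?case
    proof (cases "(s,i) = (N,1) \<or> (s,i) \<notin> H")
      case True thus ?thesis using hv_N1 hv_out by auto
    next
      case False
      hence y: "(s,i) \<in> H" "(s,i) \<noteq> (N,1)" by auto
      have "0 < infl hv (s,i)"
        by (rule infl_pos[OF y]) (use 1 False in auto)
      moreover have "th0 < th (s,i)" using th_ge[OF y] mb th0_eq by simp
      ultimately have "0 < hv (s,i)" using hv_eq[OF y] by simp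
      thus ?thesis by simp
    qed
  qed
  thus "(s,i) \<in> H \<Longrightarrow> 0 < hv (s,i)" and "0 \<le> hv (s,i)" by auto
qed


lemma Kp1: "y \<in> H \<Longrightarrow> Kp (Suc 0) x y = P x y"
  using finH by (simp add: if_distrib[of "\<lambda>z. _ * z"] cong: if_cong)

lemma surv_single: "surv_prob N b m v t {y} = (\<Sum>x\<in>H. v x * Kt t x y)"
  unfolding surv_prob_def by simp

lemma surv_swap: "surv_prob N b m v t A = (\<Sum>y\<in>A. \<Sum>x\<in>H. v x * Kt t x y)"
  unfolding surv_prob_def by (simp add: sum_distrib_left sum.swap[of _ H A])

lemma qsd_eigen:
  assumes Q: "is_QSD N b m v"
  shows "\<forall>y\<in>H. (\<Sum>x\<in>H. v x * P x y) = (\<Sum>z\<in>H. \<Sum>x\<in>H. v x * P x z) * v y"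
proof
  fix y assume y: "y \<in> H"
  have pv: "prob_on N v" using Q unfolding is_QSD_def by simp
  have qs: "\<And>t A. 0 \<le> t \<Longrightarrow> A \<subseteq> H \<Longrightarrow> cond_prob N b m v t A = sum v A"
    using Q unfolding is_QSD_def by simp
  define c where "c n z = (\<Sum>x\<in>H. v x * Kp n x z)" for n z
  define S where "S = (\<Sum>x\<in>H. \<bar>v x\<bar>)"
  have cb: "\<bar>c n z\<bar> \<le> S" for n z
  proof -
    have "\<bar>c n z\<bar> \<le> (\<Sum>x\<in>H. \<bar>v x * Kp n x z\<bar>)" unfolding c_def by (rule sum_abs)
    also have "\<dots> \<le> S" unfolding S_def
      by (intro sum_mono) (simp add: abs_mult mult_right_le_one_le Kp_abs)
    finally show ?thesis .
  qed
  have csb: "\<bar>\<Sum>z\<in>H. c n z\<bar> \<le> real (card H) * S" for n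
  proof -
    have "\<bar>\<Sum>z\<in>H. c n z\<bar> \<le> (\<Sum>z\<in>H. \<bar>c n z\<bar>)" by (rule sum_abs)
    also have "\<dots> \<le> (\<Sum>z\<in>H. S)" by (intro sum_mono cb)
    finally show ?thesis by simp
  qed
  define d where "d n = c n y - v y * (\<Sum>z\<in>H. c n z)" for n
  define D where "D = S + \<bar>v y\<bar> * (real (card H) * S)"
  have db: "\<bar>d n\<bar> \<le> D" for n
  proof -
    have "\<bar>d n\<bar> \<le> \<bar>c n y\<bar> + \<bar>v y\<bar> * \<bar>\<Sum>z\<in>H. c n z\<bar>" unfolding d_def by (simp add: abs_mult[symmetric] abs_triangle_ineq4)
    also have "\<dots> \<le> D" unfolding D_def using cb[of n y] csb[of n] by (intro add_mono mult_left_mono) auto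
    finally show ?thesis .
  qed
  have zero: "(\<Sum>n. pw t n * d n) = 0" if t: "0 \<le> t" for t
  proof -
    have sH: "surv_prob N b m v t H \<noteq> 0"
    proof
      assume "surv_prob N b m v t H = 0"
      hence "cond_prob N b m v t H = 0" unfolding cond_prob_def by simp
      moreover have "cond_prob N b m v t H = 1" using qs[OF t, of H] pv unfolding prob_on_def by simp
      ultimately show False by simp
    qed
    have "cond_prob N b m v t {y} = v y" using qs[OF t, of "{y}"] y by simp
    hence e1: "surv_prob N b m v t {y} = v y * surv_prob N b m v t H"
      using sH unfolding cond_prob_def by (simp add: field_simps)
    have s1: "surv_prob N b m v t {y} = (\<Sum>n. pw t n * c n y)"
      unfolding surv_single Kt_col[OF t] c_def ..
    have sumc: "\<And>z. summable (\<lambda>n. pw t n * c n z)" by (rule pw_summable[OF t cb])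
    have s2: "surv_prob N b m v t H = (\<Sum>n. pw t n * (\<Sum>z\<in>H. c n z))"
    proof -
      have "surv_prob N b m v t H = (\<Sum>z\<in>H. \<Sum>n. pw t n * c n z)"
        unfolding surv_swap Kt_col[OF t] c_def ..
      also have "\<dots> = (\<Sum>n. \<Sum>z\<in>H. pw t n * c n z)" by (rule suminf_sum[symmetric]) (rule sumc)
      finally show ?thesis by (simp add: sum_distrib_left)
    qed
    have "(\<Sum>n. pw t n * d n) = (\<Sum>n. pw t n * c n y - v y * (pw t n * (\<Sum>z\<in>H. c n z)))"
      unfolding d_def by (simp add: algebra_simps)
    also have "\<dots> = (\<Sum>n. pw t n * c n y) - (\<Sum>n. v y * (pw t n * (\<Sum>z\<in>H. c n z)))"
      by (rule suminf_diff[symmetric, OF sumc summable_mult[OF pw_summable[OF t csb]]])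
    also have "\<dots> = 0" using e1 s1 s2 suminf_mult[OF pw_summable[OF t csb], of "v y"] by simp
    finally show ?thesis .
  qed
  define a where "a n = L ^ n / fact n * d n" for n
  have sm: "summable (\<lambda>n. a n * u ^ n)" for u
  proof (rule summable_comparison_test)
    show "\<exists>N0. \<forall>n\<ge>N0. norm (a n * u ^ n) \<le> D * ((L * \<bar>u\<bar>) ^ n /\<^sub>R fact n)"
    proof (intro exI allI impI)
      fix n :: nat
      have "norm (a n * u ^ n) = \<bar>d n\<bar> * ((L * \<bar>u\<bar>) ^ n / fact n)"
        unfolding a_def using L_pos by (simp add: abs_mult power_abs power_mult_distrib)
      also have "\<dots> \<le> D * ((L * \<bar>u\<bar>) ^ n / fact n)" using db[of n] L_pos by (intro mult_right_mono) auto
      finally show "norm (a n * u ^ n) \<le> D * ((L * \<bar>u\<bar>) ^ n /\<^sub>R fact n)" by (simp add: divide_inverse ac_simps)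
    qed
    show "summable (\<lambda>n. D * ((L * \<bar>u\<bar>) ^ n /\<^sub>R fact n))"
      by (rule summable_mult, rule sums_summable, rule exp_converges)
  qed
  have zz: "(\<Sum>n. a n * u ^ n) = 0" if u: "0 < u" for u
  proof -
    have "(\<lambda>n. a n * u ^ n) = (\<lambda>n. exp (L * u) * (pw u n * d n))"
      by (rule ext) (simp add: a_def pw_def power_mult_distrib exp_minus field_simps)
    hence "(\<Sum>n. a n * u ^ n) = exp (L * u) * (\<Sum>n. pw u n * d n)"
      using suminf_mult[OF pw_summable[OF _ db], of u "exp (L * u)"] u by simp
    thus ?thesis using zero[of u] u by simp
  qed
  have a0: "a 0 = 0"
  proof -
    have "\<And>z. z \<in> H \<Longrightarrow> c 0 z = v z" unfolding c_def using finH
      by (simp add: if_distrib[of "\<lambda>z. _ * z"] cong: if_cong)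
    hence "(\<Sum>z\<in>H. c 0 z) = 1" using pv unfolding prob_on_def by simp
    moreover have "c 0 y = v y" using \<open>\<And>z. z \<in> H \<Longrightarrow> c 0 z = v z\<close> y by simp
    ultimately show ?thesis unfolding a_def d_def by simp
  qed
  have "a 1 = 0" by (rule ps_coeff1[OF sm zz a0])
  hence "d 1 = 0" unfolding a_def using L_pos by simp
  moreover have "\<And>z. z \<in> H \<Longrightarrow> c 1 z = (\<Sum>x\<in>H. v x * P x z)" unfolding c_def by (simp add: Kp1 del: kpow.simps)
  ultimately show "(\<Sum>x\<in>H. v x * P x y) = (\<Sum>z\<in>H. \<Sum>x\<in>H. v x * P x z) * v y"
    unfolding d_def using y by (simp add: mult.commute)
qed


lemma PN1N1: "P (N,1) (N,1) = 1 - th0 / L"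
proof -
  have "sir_rate b m (N,1) (N,1) = 0" unfolding sir_rate_def by simp
  thus ?thesis unfolding unif_kernel_def th0_def by simp
qed

lemma colN1: "(\<Sum>x\<in>H. v x * P x (N,1)) = v (N,1) * (1 - th0 / L)"
proof -
  have "(\<Sum>x\<in>H. v x * P x (N,1)) = (\<Sum>x\<in>H. if x = (N,1) then v (N,1) * (1 - th0 / L) else 0)"
  proof (intro sum.cong refl)
    fix x assume x: "x \<in> H"
    show "v x * P x (N,1) = (if x = (N,1) then v (N,1) * (1 - th0 / L) else 0)"
    proof (cases "x = (N,1)")
      case True thus ?thesis using PN1N1 by simp
    next
      case False thus ?thesis using P_N1[OF x False] by simp
    qed
  qed
  also have "\<dots> = v (N,1) * (1 - th0 / L)" using finH N1_H by simp
  finally show ?thesis .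
qed

lemma qsd_infl:
  assumes Q: "is_QSD N b m v" and pos: "0 < v (N,1)" and y: "y \<in> H"
  shows "infl v y = (th y - th0) * v y"
proof -
  have ev: "\<forall>y\<in>H. (\<Sum>x\<in>H. v x * P x y) = (\<Sum>z\<in>H. \<Sum>x\<in>H. v x * P x z) * v y"
    by (rule qsd_eigen[OF Q])
  define p where "p = (\<Sum>z\<in>H. \<Sum>x\<in>H. v x * P x z)"
  have "v (N,1) * (1 - th0 / L) = p * v (N,1)" using ev[rule_format, OF N1_H] colN1[of v] unfolding p_def by auto
  hence "(p - (1 - th0 / L)) * v (N,1) = 0" by (simp add: algebra_simps)
  hence "p = 1 - th0 / L" using pos by simp
  hence "(\<Sum>x\<in>H. v x * P x y) = (1 - th0 / L) * v y" using ev y unfolding p_def by simp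
  thus ?thesis by (rule infl_of_eigen[OF _ y])
qed

lemma qsd_nonneg: "is_QSD N b m v \<Longrightarrow> 0 \<le> v x"
  unfolding is_QSD_def prob_on_def by (cases x) simp

lemma qsd_necessary:
  assumes Q: "is_QSD N b m v" and pos: "0 < v (N,1)"
  shows "b * real N < m"
proof -
  have "(s,i) \<in> H \<longrightarrow> 0 < v (s,i) \<and> ((s,i) \<noteq> (N,1) \<longrightarrow> th0 < th (s,i))" for s i
  proof (induction "(s,i)" arbitrary: s i rule: hv.induct)
    case (1 s i)
    show ?case
    proof (cases "(s,i) = (N,1) \<or> (s,i) \<notin> H")
      case True thus ?thesis using pos by auto
    next
      case False
      hence y: "(s,i) \<in> H" "(s,i) \<noteq> (N,1)" by auto
      have "0 < infl v (s,i)"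
      proof (rule infl_pos[OF y])
        assume c: "1 \<le> i \<and> (s+1,i-1) \<in> H"
        show "0 < v (s+1,i-1)" using 1(1)[OF _ _ c] False c by blast
      next
        assume c: "(s,i+1) \<in> H"
        show "0 < v (s,i+1)" using 1(2)[OF _ _ c] False c by blast
      qed
      hence "0 < (th (s,i) - th0) * v (s,i)" using qsd_infl[OF Q pos y(1)] by simp
      hence "0 < v (s,i) \<and> th0 < th (s,i)" using qsd_nonneg[OF Q, of "(s,i)"]
        by (auto simp: zero_less_mult_iff)
      thus ?thesis by simp
    qed
  qed
  moreover have "(0,2) \<in> H" "(0::nat,2::nat) \<noteq> (N,1)" unfolding SIR_hat_def using N1 by auto
  ultimately have "th0 < th (0,2)" by blast
  thus ?thesis unfolding th0_eq sir_out_def by simp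
qed

lemma qsd_unique_hv:
  assumes Q: "is_QSD N b m v" and pos: "0 < v (N,1)"
  shows "v y = v (N,1) * hv y"
proof -
  have mb: "b * real N < m" by (rule qsd_necessary[OF Q pos])
  have out: "y \<notin> H \<Longrightarrow> v y = 0" for y using Q unfolding is_QSD_def prob_on_def by (cases y) simp
  have "v (s,i) = v (N,1) * hv (s,i)" for s i
  proof (induction "(s,i)" arbitrary: s i rule: hv.induct)
    case (1 s i)
    show ?case
    proof (cases "(s,i) = (N,1) \<or> (s,i) \<notin> H")
      case True thus ?thesis using hv_N1 hv_out out by auto
    next
      case False
      hence y: "(s,i) \<in> H" "(s,i) \<noteq> (N,1)" by auto
      have ne: "th (s,i) - th0 \<noteq> 0" using th_ge[OF y] mb th0_eq by simp
      have t1: "(if 1 \<le> i \<and> (s+1,i-1) \<in> H then v (s+1,i-1) * (b * real (s+1) * real (i-1)) else 0)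
          = v (N,1) * (if 1 \<le> i \<and> (s+1,i-1) \<in> H then hv (s+1,i-1) * (b * real (s+1) * real (i-1)) else 0)"
      proof (cases "1 \<le> i \<and> (s+1,i-1) \<in> H")
        case True
        have e: "v (s+1,i-1) = v (N,1) * hv (s+1,i-1)" using 1(1) False True by blast
        show ?thesis unfolding if_P[OF True] e by (simp only: mult.assoc)
      next
        case False show ?thesis unfolding if_not_P[OF False] by simp
      qed
      have t2: "(if (s,i+1) \<in> H then v (s,i+1) * (m * real (i+1)) else 0)
          = v (N,1) * (if (s,i+1) \<in> H then hv (s,i+1) * (m * real (i+1)) else 0)"
      proof (cases "(s,i+1) \<in> H")
        case True
        have e: "v (s,i+1) = v (N,1) * hv (s,i+1)" using 1(2) False True by blast
        show ?thesis unfolding if_P[OF True] e by (simp only: mult.assoc)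
      next
        case False show ?thesis unfolding if_not_P[OF False] by simp
      qed
      have "infl v (s,i) = v (N,1) * infl hv (s,i)"
        unfolding infl_def using t1 t2 by (simp add: distrib_left)
      hence "(th (s,i) - th0) * v (s,i) = v (N,1) * infl hv (s,i)" using qsd_infl[OF Q pos y(1)] by simp
      hence "v (s,i) = v (N,1) * infl hv (s,i) / (th (s,i) - th0)" using ne by (simp add: field_simps)
      thus ?thesis using hv_eq[OF y] by simp
    qed
  qed
  moreover obtain s i where "y = (s,i)" by fastforce
  ultimately show ?thesis by blast
qed

definition nu :: "nat \<times> nat \<Rightarrow> real" where "nu y = hv y / (\<Sum>z\<in>H. hv z)"

context
  assumes mb: "b * real N < m"
begin

lemma hvsum_pos: "0 < (\<Sum>z\<in>H. hv z)"
proof -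
  have "hv (N,1) \<le> (\<Sum>z\<in>H. hv z)"
    by (rule member_le_sum) (use N1_H finH hv_pos(2)[OF mb] in auto)
  thus ?thesis using hv_N1 by simp
qed

lemma nu_prob: "prob_on N nu"
  unfolding prob_on_def nu_def using hvsum_pos hv_pos(2)[OF mb] hv_out
  by (auto simp: sum_divide_distrib[symmetric])

lemma nu_pos: "y \<in> H \<Longrightarrow> 0 < nu y"
  unfolding nu_def using hvsum_pos hv_pos(1)[OF mb] by (cases y) auto

lemma nu_eigen: "y \<in> H \<Longrightarrow> (\<Sum>x\<in>H. nu x * P x y) = (1 - th0 / L) * nu y"
proof (rule eigen_of_infl)
  fix y assume y: "y \<in> H" "y \<noteq> (N,1)"
  obtain s i where yy: "y = (s,i)" by fastforce
  have ne: "th y - th0 \<noteq> 0" using th_ge[of s i] y yy mb th0_eq by simp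
  have "infl nu y = infl hv y / (\<Sum>z\<in>H. hv z)"
    unfolding infl_def nu_def yy by (simp add: add_divide_distrib)
  also have "infl hv y = (th y - th0) * hv y" using hv_eq[of s i] y yy ne by simp
  finally show "infl nu y = (th y - th0) * nu y" unfolding nu_def by simp
qed

end

lemma eigen_QSD:
  assumes pv: "prob_on N v" and ev: "\<And>z. z \<in> H \<Longrightarrow> (\<Sum>x\<in>H. v x * P x z) = p * v z"
  shows "is_QSD N b m v"
  unfolding is_QSD_def
proof (intro conjI allI impI pv)
  fix t :: real and A assume t: "0 \<le> t" and A: "A \<subseteq> H"
  define E where "E = exp (- L * t) * exp (L * t * p)"
  have "\<And>B. B \<subseteq> H \<Longrightarrow> surv_prob N b m v t B = E * sum v B"
  proof -
    fix B assume B: "B \<subseteq> H"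
    have "surv_prob N b m v t B = (\<Sum>y\<in>B. E * v y)"
      unfolding surv_swap E_def by (intro sum.cong refl Kt_left_eigen[OF ev _ t]) (use B in auto)
    thus "surv_prob N b m v t B = E * sum v B" by (simp add: sum_distrib_left)
  qed
  moreover have "E > 0" unfolding E_def by simp
  moreover have "sum v H = 1" using pv unfolding prob_on_def by simp
  ultimately show "cond_prob N b m v t A = sum v A" unfolding cond_prob_def using A by simp
qed


lemma exp_decay: fixes c :: real assumes c: "0 < c" shows "((\<lambda>t. exp (- c * t)) \<longlongrightarrow> 0) at_top"
proof -
  have "filterlim (\<lambda>t. (- c) * t) at_bot at_top"
    using filterlim_tendsto_neg_mult_at_bot[of "\<lambda>_. -c" "-c" at_top "\<lambda>t. t"] c by (simp add: filterlim_ident)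
  thus ?thesis by (rule filterlim_compose[OF exp_at_bot])
qed

lemma exp_rate: "exp (- L * t) * exp (L * t * (1 - r / L)) = exp (- r * t)"
proof -
  have "- L * t + L * t * (1 - r / L) = - r * t" using L_pos by (simp add: field_simps)
  thus ?thesis by (simp add: exp_add[symmetric])
qed

lemma phi_pos: "(s,i) \<in> H \<Longrightarrow> 1 \<le> phi (s,i)"
  using memH(2) unfolding phi_def by fastforce

lemma phi_le: "y \<in> H \<Longrightarrow> phi y \<le> 2*N+1"
  using memH(4) unfolding phi_def by (cases y) fastforce

lemma upper_weight:
  assumes x: "(s,i) \<in> H" and hth: "tm \<le> th (s,i)" and r: "r < tm" and M: "1 \<le> M" "tm \<le> M * (tm - r)"
    and w: "\<And>y. 0 \<le> w y \<and> w y \<le> M ^ phi y" and wx: "w (s,i) = M ^ phi (s,i)"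
  shows "(\<Sum>z\<in>H. P (s,i) z * w z) \<le> (1 - r / L) * w (s,i)"
proof -
  define K where "K = M ^ (phi (s,i) - 1)"
  have K0: "0 \<le> K" unfolding K_def using M by simp
  have wK: "w (s,i) = M * K" unfolding wx K_def using phi_pos[OF x]
    by (metis Suc_diff_le diff_Suc_1 power_Suc)
  define T where "T = (if 1 \<le> s \<and> (s-1,i+1) \<in> H then b * real s * real i * w (s-1,i+1) else 0)
   + (if 1 \<le> i \<and> (s,i-1) \<in> H then m * real i * w (s,i-1) else 0)"
  have row: "(\<Sum>z\<in>H. P (s,i) z * w z) = (1 - th (s,i) / L) * w (s,i) + T / L"
    unfolding T_def by (rule row_P[OF x])
  have T1: "(if 1 \<le> s \<and> (s-1,i+1) \<in> H then b * real s * real i * w (s-1,i+1) else 0)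
      \<le> (if 1 \<le> s \<and> (s-1,i+1) \<in> H then b * real s * real i else 0) * K"
  proof (cases "1 \<le> s \<and> (s-1,i+1) \<in> H")
    case True
    have "phi (s-1,i+1) = phi (s,i) - 1" using True unfolding phi_def by auto
    hence "w (s-1,i+1) \<le> K" using w[of "(s-1,i+1)"] unfolding K_def by simp
    thus ?thesis using True bpos by (simp add: mult_left_mono)
  next
    case False thus ?thesis unfolding if_not_P[OF False] by simp
  qed
  have T2: "(if 1 \<le> i \<and> (s,i-1) \<in> H then m * real i * w (s,i-1) else 0)
      \<le> (if 1 \<le> i \<and> (s,i-1) \<in> H then m * real i else 0) * K"
  proof (cases "1 \<le> i \<and> (s,i-1) \<in> H")
    case True
    have "phi (s,i-1) = phi (s,i) - 1" using True unfolding phi_def by auto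
    hence "w (s,i-1) \<le> K" using w[of "(s,i-1)"] unfolding K_def by simp
    thus ?thesis using True mpos by (simp add: mult_left_mono)
  next
    case False thus ?thesis unfolding if_not_P[OF False] by simp
  qed
  have "T \<le> ((if 1 \<le> s \<and> (s-1,i+1) \<in> H then b * real s * real i else 0)
      + (if 1 \<le> i \<and> (s,i-1) \<in> H then m * real i else 0)) * K"
    unfolding T_def distrib_right using T1 T2 by (rule add_mono)
  also have "\<dots> \<le> th (s,i) * K" by (rule mult_right_mono[OF rowsum_rate_le[OF x] K0])
  also have "th (s,i) * K \<le> (th (s,i) - r) * M * K"
  proof (rule mult_right_mono[OF _ K0])
    have "th (s,i) * (M - 1) \<ge> tm * (M - 1)" using hth M by (intro mult_right_mono) auto
    thus "th (s,i) \<le> (th (s,i) - r) * M" using M by (simp add: algebra_simps)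
  qed
  finally have TT: "T \<le> (th (s,i) - r) * M * K" .
  have "(1 - th (s,i) / L) * w (s,i) + T / L = (1 - r / L) * w (s,i) - ((th (s,i) - r) * M * K - T) / L"
    unfolding wK using L_pos by (simp add: field_simps)
  also have "\<dots> \<le> (1 - r / L) * w (s,i)" using TT L_pos by simp
  finally show ?thesis unfolding row .
qed

lemma lower_weight:
  assumes x: "(s,i) \<in> H" "(s,i) \<noteq> (N,1)" and e: "e = min b m / L"
  shows "(\<Sum>z\<in>H. P (s,i) z * e ^ phi z) \<ge> (1 - 2 * m / L) * e ^ phi (s,i)"
proof -
  have e0: "0 < e" unfolding e using bpos mpos L_pos by simp
  define K where "K = e ^ (phi (s,i) - 1)"
  have K0: "0 \<le> K" unfolding K_def using e0 by simp
  have wK: "e ^ phi (s,i) = e * K" unfolding K_def using phi_pos[OF x(1)]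
    by (metis Suc_diff_le diff_Suc_1 power_Suc)
  define T where "T = (if 1 \<le> s \<and> (s-1,i+1) \<in> H then b * real s * real i * e ^ phi (s-1,i+1) else 0)
   + (if 1 \<le> i \<and> (s,i-1) \<in> H then m * real i * e ^ phi (s,i-1) else 0)"
  have row: "(\<Sum>z\<in>H. P (s,i) z * e ^ phi z) = (1 - th (s,i) / L) * e ^ phi (s,i) + T / L"
    unfolding T_def by (rule row_P[OF x(1)])
  have h: "2 \<le> i" "s + i \<le> N + 1" using memH(5)[OF x(1)] x(2) by auto
  have T1: "0 \<le> (if 1 \<le> s \<and> (s-1,i+1) \<in> H then b * real s * real i * e ^ phi (s-1,i+1) else 0)"
    using bpos e0 by simp
  have T2: "0 \<le> (if 1 \<le> i \<and> (s,i-1) \<in> H then m * real i * e ^ phi (s,i-1) else 0)"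
    using mpos e0 by simp
  show ?thesis
  proof (cases "(s,i) = (0,2)")
    case True
    have "T = 0" unfolding T_def using True N1 unfolding SIR_hat_def by auto
    moreover have "th (s,i) = 2 * m" using True unfolding sir_out_def by simp
    ultimately show ?thesis unfolding row by simp
  next
    case False
    have "min b m * K \<le> T"
    proof (cases "3 \<le> i")
      case True
      have inH: "(s,i-1) \<in> H" using h True unfolding SIR_hat_def by auto
      have ph: "phi (s,i-1) = phi (s,i) - 1" using True unfolding phi_def by auto
      have "min b m * K \<le> m * real i * K"
      proof (rule mult_right_mono[OF _ K0])
        have "m \<le> m * real i" using True mpos by simp
        thus "min b m \<le> m * real i" by linarith
      qed
      also have "\<dots> = (if 1 \<le> i \<and> (s,i-1) \<in> H then m * real i * e ^ phi (s,i-1) else 0)"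
        using inH True ph unfolding K_def by simp
      finally show ?thesis unfolding T_def using T1 by linarith
    next
      case False': False
      hence i2: "i = 2" using h by simp
      hence s1: "1 \<le> s" using False by (cases s) auto
      have inH: "(s-1,i+1) \<in> H" using h i2 s1 unfolding SIR_hat_def by auto
      have ph: "phi (s-1,i+1) = phi (s,i) - 1" using s1 unfolding phi_def by auto
      have "min b m * K \<le> b * real s * real i * K"
      proof (rule mult_right_mono[OF _ K0])
        have "1 \<le> real s * real i" using s1 i2 by simp
        hence "b \<le> b * (real s * real i)" using bpos by simp
        thus "min b m \<le> b * real s * real i" by (simp add: mult.assoc)
      qed
      also have "\<dots> = (if 1 \<le> s \<and> (s-1,i+1) \<in> H then b * real s * real i * e ^ phi (s-1,i+1) else 0)"
        using inH s1 ph unfolding K_def by simp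
      finally show ?thesis unfolding T_def using T2 by linarith
    qed
    moreover have "L * e ^ phi (s,i) = min b m * K" unfolding wK using e L_pos by simp
    ultimately have "L * e ^ phi (s,i) \<le> T" by simp
    hence "e ^ phi (s,i) \<le> T / L" using L_pos by (simp add: field_simps)
    moreover have "0 \<le> (1 - th (s,i) / L) * e ^ phi (s,i)"
      using th_lt_L[OF x(1)] L_pos e0 by simp
    moreover have "(1 - 2 * m / L) * e ^ phi (s,i) \<le> e ^ phi (s,i)" using mpos L_pos e0 by (simp add: field_simps)
    ultimately show ?thesis unfolding row by linarith
  qed
qed


definition "dl = min m (2 * b)"
definition "r1 = 2 * m + dl / 2"
definition "M1 = 2 * (2 * m + dl) / dl"
definition "e1 = min b m / L"
definition "C1 = M1 ^ (2*N+1)"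

lemma dl_pos: "0 < dl" unfolding dl_def using bpos mpos by simp
lemma M1_ge: "1 \<le> M1" unfolding M1_def using dl_pos mpos by (simp add: field_simps dl_def)
lemma e1_pos: "0 < e1" unfolding e1_def using bpos mpos L_pos by simp
lemma L_ge4: "4 * (b + m) \<le> L"
proof -
  have "(2::real) \<le> real N + 1" using N1 by simp
  hence "2 * 2 \<le> (real N + 1) * (real N + 1)" by (intro mult_mono) auto
  hence "4 \<le> (real N + 1)^2" by (simp add: power2_eq_square)
  hence "(b + m) * 4 \<le> (b + m) * (real N + 1)^2" using bpos mpos by (intro mult_left_mono) auto
  thus ?thesis unfolding unif_rate_def by simp
qed

lemma L_ge: "3 * m \<le> L"
proof -
  have "4 * b + 4 * m \<le> L" using L_ge4 by (simp add: algebra_simps)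
  thus ?thesis using bpos mpos by linarith
qed

lemma e1_le: "e1 \<le> 1"
proof -
  have "min b m \<le> L" using L_ge4 bpos mpos by simp
  thus ?thesis unfolding e1_def using L_pos by simp
qed

lemma th_U: assumes "(s,i) \<in> H" "(s,i) \<noteq> (N,1)" "(s,i) \<noteq> (0,2)" shows "2 * m + dl \<le> th (s,i)"
proof -
  have h: "2 \<le> i" using memH(5)[OF assms(1)] assms(2) by auto
  show ?thesis
  proof (cases "3 \<le> i")
    case True
    have "3 * m \<le> real i * m" using True mpos by (intro mult_right_mono) auto
    also have "\<dots> \<le> real i * (b * real s + m)" using bpos by (intro mult_left_mono) auto
    finally show ?thesis unfolding sir_out_def dl_def by simp
  next
    case False
    hence "i = 2" using h by simp
    moreover have "1 \<le> s" using assms(3) \<open>i = 2\<close> by (cases s) auto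
    ultimately have "2 * (b + m) \<le> real i * (b * real s + m)" using bpos mpos by simp
    thus ?thesis unfolding sir_out_def dl_def by simp
  qed
qed

definition "w1 y = (if y \<in> H \<and> y \<noteq> (N,1) \<and> y \<noteq> (0,2) then M1 ^ phi y else 0)"

lemma w1_bound: "0 \<le> w1 y \<and> w1 y \<le> M1 ^ phi y"
  unfolding w1_def using M1_ge by simp

lemma x02_row: "(\<Sum>z\<in>H. P (0,2) z * f z) = (1 - 2 * m / L) * f (0,2)"
proof -
  have "(0::nat,2::nat) \<in> H" unfolding SIR_hat_def using N1 by auto
  moreover have "(0::nat,1::nat) \<notin> H" unfolding SIR_hat_def using N1 by auto
  ultimately show ?thesis using row_P[of 0 2 f] unfolding sir_out_def by simp
qed

lemma in02: "(0::nat,2::nat) \<in> H" unfolding SIR_hat_def using N1 by auto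

lemma KtU: assumes t: "0 \<le> t" and x: "x \<in> H" "x \<noteq> (N,1)" and y: "y \<in> H" "y \<noteq> (N,1)" "y \<noteq> (0,2)"
  shows "Kt t x y \<le> exp (- r1 * t) * C1"
proof -
  define D where "D = H - {(N,1)}"
  have q: "0 \<le> 1 - r1 / L"
  proof -
    have "dl \<le> m" unfolding dl_def by simp
    hence "r1 \<le> 3 * m" unfolding r1_def using mpos by simp
    thus ?thesis using L_ge L_pos by (simp add: field_simps)
  qed
  have hw: "(\<Sum>z\<in>H. P x' z * w1 z) \<le> (1 - r1 / L) * w1 x'" if x': "x' \<in> D" for x'
  proof (cases "x' = (0,2)")
    case True
    thus ?thesis using x02_row[of w1] unfolding w1_def by simp
  next
    case False
    obtain s i where xs: "x' = (s,i)" by fastforce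
    have xH: "(s,i) \<in> H" "(s,i) \<noteq> (N,1)" "(s,i) \<noteq> (0,2)" using x' xs False unfolding D_def by auto
    show ?thesis unfolding xs
    proof (rule upper_weight[OF xH(1) th_U[OF xH] _ M1_ge _ w1_bound])
      show "r1 < 2 * m + dl" unfolding r1_def using dl_pos by simp
      show "2 * m + dl \<le> M1 * (2 * m + dl - r1)" unfolding M1_def r1_def using dl_pos by (simp add: field_simps)
      show "w1 (s,i) = M1 ^ phi (s,i)" unfolding w1_def using xH False xs by simp
    qed
  qed
  have "(\<Sum>y\<in>H. Kt t x y * w1 y) \<le> exp (- L * t) * exp (L * t * (1 - r1 / L)) * w1 x"
  proof (rule Kt_upper[of D, OF _ _ q hw t])
    fix x' z assume "x' \<in> D" "z \<in> H" "z \<notin> D"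
    hence "z = (N,1)" "x' \<in> H" "x' \<noteq> (N,1)" unfolding D_def by auto
    thus "P x' z = 0" using P_N1 by simp
  qed (use x in \<open>auto simp: D_def\<close>)
  also have "\<dots> = exp (- r1 * t) * w1 x" unfolding exp_rate ..
  also have "\<dots> \<le> exp (- r1 * t) * C1"
  proof (rule mult_left_mono)
    have "w1 x \<le> M1 ^ phi x" using w1_bound by simp
    also have "\<dots> \<le> M1 ^ (2*N+1)" by (rule power_increasing[OF phi_le[OF x(1)] M1_ge])
    finally show "w1 x \<le> C1" unfolding C1_def .
  qed simp
  finally have S: "(\<Sum>y\<in>H. Kt t x y * w1 y) \<le> exp (- r1 * t) * C1" .
  have "Kt t x y \<le> Kt t x y * w1 y"
  proof -
    have "1 \<le> w1 y" unfolding w1_def using y M1_ge by simp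
    thus ?thesis using Kt_nonneg[OF t x(1), of y] by (metis mult_left_mono mult.right_neutral)
  qed
  also have "\<dots> \<le> (\<Sum>y\<in>H. Kt t x y * w1 y)"
    by (rule member_le_sum) (use y finH Kt_nonneg[OF t x(1)] w1_bound in auto)
  finally show ?thesis using S by simp
qed


lemma C1_nonneg: "0 \<le> C1" unfolding C1_def using M1_ge by simp

lemma Kt02: assumes t: "0 \<le> t" and x: "x \<in> H" "x \<noteq> (N,1)"
  shows "exp (- (2 * m) * t) * e1 ^ (2*N+1) - real (card H) * (exp (- r1 * t) * C1) \<le> e1^2 * Kt t x (0,2)"
proof -
  define D where "D = H - {(N,1)}"
  define g where "g y = e1 ^ phi y" for y
  have q: "0 \<le> 1 - 2 * m / L" using L_ge L_pos mpos by (simp add: field_simps)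
  have hw: "(1 - 2 * m / L) * g x' \<le> (\<Sum>z\<in>H. P x' z * g z)" if x': "x' \<in> D" for x'
  proof -
    obtain s i where xs: "x' = (s,i)" by fastforce
    have xH: "(s,i) \<in> H" "(s,i) \<noteq> (N,1)" using x' xs unfolding D_def by auto
    show ?thesis unfolding xs g_def by (rule lower_weight[OF xH e1_def])
  qed
  have "exp (- L * t) * exp (L * t * (1 - 2 * m / L)) * g x \<le> (\<Sum>y\<in>H. Kt t x y * g y)"
  proof (rule Kt_lower[of D, OF _ _ q hw t])
    fix x' z assume "x' \<in> D" "z \<in> H" "z \<notin> D"
    hence "z = (N,1)" "x' \<in> H" "x' \<noteq> (N,1)" unfolding D_def by auto
    thus "P x' z = 0" using P_N1 by simp
  qed (use x in \<open>auto simp: D_def\<close>)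
  hence low: "exp (- (2 * m) * t) * g x \<le> (\<Sum>y\<in>H. Kt t x y * g y)" unfolding exp_rate .
  have gx: "e1 ^ (2*N+1) \<le> g x" unfolding g_def
    by (rule power_decreasing[OF phi_le[OF x(1)]]) (use e1_pos e1_le in auto)
  have split: "(\<Sum>y\<in>H. Kt t x y * g y) = Kt t x (0,2) * g (0,2) + (\<Sum>y\<in>H - {(0,2)}. Kt t x y * g y)"
    using sum.remove[OF finH in02] by simp
  have rest: "(\<Sum>y\<in>H - {(0,2)}. Kt t x y * g y) \<le> real (card H) * (exp (- r1 * t) * C1)"
  proof -
    have "(\<Sum>y\<in>H - {(0,2)}. Kt t x y * g y) \<le> (\<Sum>y\<in>H - {(0,2)}. exp (- r1 * t) * C1)"
    proof (rule sum_mono)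
      fix y assume y: "y \<in> H - {(0,2)}"
      have g01: "0 \<le> g y" "g y \<le> 1" unfolding g_def using e1_pos e1_le by (auto intro: power_le_one)
      have k0: "0 \<le> Kt t x y" by (rule Kt_nonneg[OF t x(1)])
      have "Kt t x y * g y \<le> Kt t x y" using g01 k0 by (simp add: mult_left_le)
      also have "Kt t x y \<le> exp (- r1 * t) * C1"
      proof (cases "y = (N,1)")
        case True thus ?thesis using Kt_N1[OF x] C1_nonneg by simp
      next
        case False thus ?thesis using KtU[OF t x] y by simp
      qed
      finally show "Kt t x y * g y \<le> exp (- r1 * t) * C1" .
    qed
    also have "\<dots> = real (card (H - {(0,2)})) * (exp (- r1 * t) * C1)" by simp
    also have "\<dots> \<le> real (card H) * (exp (- r1 * t) * C1)"
      by (intro mult_right_mono) (use C1_nonneg card_Diff1_le[of H "(0,2)"] in auto)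
    finally show ?thesis .
  qed
  have "exp (- (2 * m) * t) * e1 ^ (2*N+1) \<le> exp (- (2 * m) * t) * g x"
    using gx by simp
  also have "\<dots> \<le> Kt t x (0,2) * g (0,2) + (\<Sum>y\<in>H - {(0,2)}. Kt t x y * g y)" using low split by simp
  finally have X: "exp (- (2 * m) * t) * e1 ^ (2*N+1) \<le> Kt t x (0,2) * g (0,2) + (\<Sum>y\<in>H - {(0,2)}. Kt t x y * g y)" .
  have g02: "g (0,2) = e1^2" unfolding g_def phi_def by (simp add: power2_eq_square)
  show ?thesis using X rest unfolding g02 by (simp add: mult.commute)
qed


lemma N1_ne_02: "(N,1) \<noteq> ((0::nat),(2::nat))" using N1 by auto

lemma rho_limit:
  assumes pr: "prob_on N \<rho>" and r0: "\<rho> (N,1) = 0" and y: "y \<in> H"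
  shows "((\<lambda>t. cond_prob N b m \<rho> t {y}) \<longlongrightarrow> dirac_at (0,2) y) at_top"
proof -
  have rn: "\<And>x. 0 \<le> \<rho> x" and rs: "sum \<rho> H = 1" using pr unfolding prob_on_def by auto
  define bv where "bv t z = (\<Sum>x\<in>H. \<rho> x * Kt t x z)" for t z
  define U where "U = H - {(N,1), (0,2)}"
  have cond: "cond_prob N b m \<rho> t {y} = bv t y / (\<Sum>z\<in>H. bv t z)" for t
    unfolding cond_prob_def surv_swap bv_def by simp
  have bv0: "0 \<le> bv t z" if "0 \<le> t" for t z
    unfolding bv_def using that by (intro sum_nonneg mult_nonneg_nonneg rn Kt_nonneg) auto
  have bvN1: "bv t (N,1) = 0" for t
    unfolding bv_def
  proof (intro sum.neutral ballI)
    fix x assume x: "x \<in> H"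
    show "\<rho> x * Kt t x (N,1) = 0"
    proof (cases "x = (N,1)")
      case True thus ?thesis using r0 by simp
    next
      case False thus ?thesis using Kt_N1[OF x False] by simp
    qed
  qed
  have bvU: "bv t z \<le> exp (- r1 * t) * C1" if t: "0 \<le> t" and z: "z \<in> U" for t z
  proof -
    have "bv t z \<le> (\<Sum>x\<in>H. \<rho> x * (exp (- r1 * t) * C1))"
      unfolding bv_def
    proof (rule sum_mono)
      fix x assume x: "x \<in> H"
      show "\<rho> x * Kt t x z \<le> \<rho> x * (exp (- r1 * t) * C1)"
      proof (cases "x = (N,1)")
        case True thus ?thesis using r0 by simp
      next
        case False
        have "z \<in> H" "z \<noteq> (N,1)" "z \<noteq> (0,2)" using z unfolding U_def by auto
        hence "Kt t x z \<le> exp (- r1 * t) * C1" by (rule KtU[OF t x False])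
        thus ?thesis using rn[of x] by (rule mult_left_mono)
      qed
    qed
    also have "\<dots> = exp (- r1 * t) * C1" using rs by (simp add: sum_distrib_right[symmetric])
    finally show ?thesis .
  qed
  have bv02: "exp (- (2 * m) * t) * e1 ^ (2*N+1) - real (card H) * (exp (- r1 * t) * C1) \<le> e1^2 * bv t (0,2)"
    if t: "0 \<le> t" for t
  proof -
    let ?LB = "exp (- (2 * m) * t) * e1 ^ (2*N+1) - real (card H) * (exp (- r1 * t) * C1)"
    have "?LB = (\<Sum>x\<in>H. \<rho> x * ?LB)" using rs by (simp add: sum_distrib_right[symmetric])
    also have "\<dots> \<le> (\<Sum>x\<in>H. \<rho> x * (e1^2 * Kt t x (0,2)))"
    proof (rule sum_mono)
      fix x assume x: "x \<in> H"
      show "\<rho> x * ?LB \<le> \<rho> x * (e1^2 * Kt t x (0,2))"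
      proof (cases "x = (N,1)")
        case True thus ?thesis using r0 by simp
      next
        case False thus ?thesis using Kt02[OF t x False] rn[of x] by (auto intro: mult_left_mono)
      qed
    qed
    also have "\<dots> = e1^2 * bv t (0,2)" unfolding bv_def by (simp add: sum_distrib_left ac_simps)
    finally show ?thesis .
  qed
  have Heq: "H = insert (0,2) (insert (N,1) U)" using in02 N1_H unfolding U_def by auto
  have finU: "finite U" unfolding U_def using finH by simp
  have Hsplit: "(\<Sum>z\<in>H. bv t z) = bv t (0,2) + (\<Sum>z\<in>U. bv t z)" for t
  proof -
    have "(0::nat,2::nat) \<notin> insert (N,1) U" using N1_ne_02 unfolding U_def by auto
    moreover have "(N,1) \<notin> U" unfolding U_def by simp
    ultimately show ?thesis unfolding Heq using finU bvN1 by simp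
  qed
  define E where "E t = exp (2 * m * t)" for t
  define A where "A t = E t * bv t (0,2)" for t
  define SU where "SU t = E t * (\<Sum>z\<in>U. bv t z)" for t
  define Z where "Z t = real (card H) * C1 * exp (- (dl / 2) * t)" for t
  have Epos: "0 < E t" for t unfolding E_def by simp
  have Zlim: "(Z \<longlongrightarrow> 0) at_top"
    unfolding Z_def using tendsto_mult[OF tendsto_const exp_decay[of "dl/2"], of "real (card H) * C1"] dl_pos by simp
  have eZ: "E t * exp (- r1 * t) = exp (- (dl / 2) * t)" for t
    unfolding E_def r1_def by (simp add: exp_add[symmetric] algebra_simps)
  have SUb: "0 \<le> SU t \<and> SU t \<le> Z t" if t: "0 \<le> t" for t
  proof
    show "0 \<le> SU t" unfolding SU_def using Epos[of t] bv0[OF t] by (intro mult_nonneg_nonneg sum_nonneg) (auto intro: less_imp_le)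
    have "(\<Sum>z\<in>U. bv t z) \<le> (\<Sum>z\<in>U. exp (- r1 * t) * C1)" by (intro sum_mono bvU[OF t])
    also have "\<dots> = real (card U) * (exp (- r1 * t) * C1)" by simp
    also have "\<dots> \<le> real (card H) * (exp (- r1 * t) * C1)"
      by (intro mult_right_mono) (use C1_nonneg finH in \<open>auto simp: U_def intro: card_mono\<close>)
    finally have "SU t \<le> E t * (real (card H) * (exp (- r1 * t) * C1))"
      unfolding SU_def using Epos[of t] by (simp add: mult_left_mono)
    also have "\<dots> = Z t" unfolding Z_def using eZ[of t] by (simp add: ac_simps)
    finally show "SU t \<le> Z t" .
  qed
  have Ab: "e1 ^ (2*N+1) - Z t \<le> e1^2 * A t" if t: "0 \<le> t" for t
  proof -
    have "E t * (exp (- (2 * m) * t) * e1 ^ (2*N+1) - real (card H) * (exp (- r1 * t) * C1))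
        \<le> E t * (e1^2 * bv t (0,2))" using bv02[OF t] Epos[of t] by (simp add: mult_left_mono)
    moreover have "E t * (exp (- (2 * m) * t) * e1 ^ (2*N+1) - real (card H) * (exp (- r1 * t) * C1))
        = e1 ^ (2*N+1) * (E t * exp (- (2 * m) * t)) - real (card H) * C1 * (E t * exp (- r1 * t))"
      by (simp add: algebra_simps)
    moreover have "E t * exp (- (2 * m) * t) = 1" unfolding E_def by (simp add: exp_add[symmetric])
    moreover have "E t * (e1^2 * bv t (0,2)) = e1^2 * A t" unfolding A_def by (simp add: ac_simps)
    ultimately show ?thesis unfolding Z_def eZ by simp
  qed
  define k where "k = e1 ^ (2*N+1) / (2 * e1^2)"
  have kpos: "0 < k" unfolding k_def using e1_pos by simp
  have evZ: "eventually (\<lambda>t. Z t < e1 ^ (2*N+1) / 2) at_top"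
    by (rule order_tendstoD(2)[OF Zlim]) (simp add: e1_pos)
  have ev: "eventually (\<lambda>t. 0 \<le> t \<and> k \<le> A t) at_top"
    using eventually_conj[OF eventually_ge_at_top[of 0] evZ]
  proof (rule eventually_mono)
    fix t assume a: "0 \<le> t \<and> Z t < e1 ^ (2*N+1) / 2"
    hence "e1 ^ (2*N+1) / 2 \<le> e1^2 * A t" using Ab[of t] by simp
    hence "k \<le> A t" unfolding k_def using e1_pos by (simp add: field_simps)
    thus "0 \<le> t \<and> k \<le> A t" using a by simp
  qed
  have condE: "cond_prob N b m \<rho> t {y} = (E t * bv t y) / (A t + SU t)" for t
    unfolding cond Hsplit A_def SU_def using Epos[of t]
    by (simp add: distrib_left[symmetric])
  have Zk: "((\<lambda>t. Z t / k) \<longlongrightarrow> 0) at_top" by (rule tendsto_divide_zero[OF Zlim])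
  have ratio: "SU t / (A t + SU t) \<le> Z t / k" if "0 \<le> t \<and> k \<le> A t" for t
  proof -
    have su: "0 \<le> SU t" "SU t \<le> Z t" using SUb that by auto
    have "SU t / (A t + SU t) \<le> SU t / k" using su kpos that by (intro divide_left_mono) auto
    also have "\<dots> \<le> Z t / k" using su kpos by (simp add: divide_right_mono)
    finally show ?thesis .
  qed
  consider "y = (0,2)" | "y = (N,1)" | "y \<in> U" using y unfolding U_def by auto
  thus ?thesis
  proof cases
    case 1
    have d: "dirac_at (0,2) y = 1" unfolding dirac_at_def 1 by simp
    show ?thesis unfolding d
    proof (rule tendsto_sandwich[of "\<lambda>t. 1 - Z t / k" _ _ "\<lambda>t. 1"])
      show "eventually (\<lambda>t. 1 - Z t / k \<le> cond_prob N b m \<rho> t {y}) at_top"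
      proof (rule eventually_mono[OF ev])
        fix t assume a: "0 \<le> t \<and> k \<le> A t"
        have pos: "0 < A t + SU t" using a kpos SUb[of t] by auto
        have c: "cond_prob N b m \<rho> t {y} = A t / (A t + SU t)" using condE[of t] unfolding 1 A_def by simp
        have "cond_prob N b m \<rho> t {y} = 1 - SU t / (A t + SU t)"
          unfolding c using pos by (simp add: field_simps)
        thus "1 - Z t / k \<le> cond_prob N b m \<rho> t {y}" using ratio[OF a] by simp
      qed
      show "eventually (\<lambda>t. cond_prob N b m \<rho> t {y} \<le> 1) at_top"
      proof (rule eventually_mono[OF ev])
        fix t assume a: "0 \<le> t \<and> k \<le> A t"
        have pos: "0 < A t + SU t" using a kpos SUb[of t] by auto
        have "A t \<le> A t + SU t" using SUb[of t] a by simp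
        moreover have c: "cond_prob N b m \<rho> t {y} = A t / (A t + SU t)" using condE[of t] unfolding 1 A_def by simp
        ultimately show "cond_prob N b m \<rho> t {y} \<le> 1"
          using pos by simp
      qed
      show "((\<lambda>t. 1 - Z t / k) \<longlongrightarrow> 1) at_top" using tendsto_diff[OF tendsto_const Zk, of 1] by simp
    qed simp
  next
    case 2
    have d: "dirac_at (0,2) y = 0" unfolding dirac_at_def 2 using N1_ne_02 by simp
    have "cond_prob N b m \<rho> t {y} = 0" for t using cond[of t] bvN1[of t] unfolding 2 by simp
    thus ?thesis unfolding d by simp
  next
    case 3
    have d: "dirac_at (0,2) y = 0" unfolding dirac_at_def using 3 unfolding U_def by auto
    show ?thesis unfolding d
    proof (rule tendsto_sandwich[of "\<lambda>t. 0" _ _ "\<lambda>t. Z t / k"])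
      show "eventually (\<lambda>t. 0 \<le> cond_prob N b m \<rho> t {y}) at_top"
      proof (rule eventually_mono[OF ev])
        fix t assume a: "0 \<le> t \<and> k \<le> A t"
        have pos: "0 < A t + SU t" using a kpos SUb[of t] by auto
        show "0 \<le> cond_prob N b m \<rho> t {y}" unfolding condE using pos Epos[of t] bv0[of t y] a
          by (simp add: less_imp_le)
      qed
      show "eventually (\<lambda>t. cond_prob N b m \<rho> t {y} \<le> Z t / k) at_top"
      proof (rule eventually_mono[OF ev])
        fix t assume a: "0 \<le> t \<and> k \<le> A t"
        have pos: "0 < A t + SU t" using a kpos SUb[of t] by auto
        have "E t * bv t y \<le> SU t"
        proof -
          have "bv t y \<le> (\<Sum>z\<in>U. bv t z)" by (rule member_le_sum) (use 3 finU bv0 a in auto)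
          thus ?thesis unfolding SU_def using Epos[of t] by simp
        qed
        hence "cond_prob N b m \<rho> t {y} \<le> SU t / (A t + SU t)" unfolding condE using pos
          by (simp add: divide_right_mono)
        thus "cond_prob N b m \<rho> t {y} \<le> Z t / k" using ratio[OF a] by simp
      qed
    qed (simp_all add: Zk)
  qed
qed


definition "r2 = (th0 + 2 * m) / 2"
definition "M2 = 4 * m / (2 * m - th0)"
definition "C2 = M2 ^ (2*N+1)"

lemma th0_pos: "0 < th0" unfolding th0_eq using bpos mpos by (intro add_nonneg_pos) auto

context
  assumes mb: "b * real N < m"
begin

lemma th0_lt: "th0 < 2 * m" unfolding th0_eq using mb by simp

lemma M2_ge: "1 \<le> M2"
  unfolding M2_def using th0_lt th0_pos mpos by (simp add: field_simps)

lemma C2_nonneg: "0 \<le> C2" unfolding C2_def using M2_ge by simp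

lemma KtD: assumes t: "0 \<le> t" and x: "x \<in> H" "x \<noteq> (N,1)"
  shows "Kt t x y \<le> exp (- r2 * t) * C2"
proof (cases "y \<in> H")
  case False
  thus ?thesis using Kt_out[OF x(1) False] C2_nonneg by simp
next
  case y: True
  define D where "D = H - {(N,1)}"
  define w where "w y = M2 ^ phi y" for y
  have q: "0 \<le> 1 - r2 / L"
  proof -
    have "r2 \<le> 3 * m" unfolding r2_def using th0_lt mpos by simp
    thus ?thesis using L_ge L_pos by (simp add: field_simps)
  qed
  have hw: "(\<Sum>z\<in>H. P x' z * w z) \<le> (1 - r2 / L) * w x'" if x': "x' \<in> D" for x'
  proof -
    obtain s i where xs: "x' = (s,i)" by fastforce
    have xH: "(s,i) \<in> H" "(s,i) \<noteq> (N,1)" using x' xs unfolding D_def by auto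
    show ?thesis unfolding xs
    proof (rule upper_weight[OF xH(1) th_ge[OF xH] _ M2_ge])
      show "r2 < 2 * m" unfolding r2_def using th0_lt by simp
      show "2 * m \<le> M2 * (2 * m - r2)" unfolding M2_def r2_def using th0_lt by (simp add: field_simps)
      show "\<And>y. 0 \<le> w y \<and> w y \<le> M2 ^ phi y" unfolding w_def using M2_ge by simp
      show "w (s,i) = M2 ^ phi (s,i)" unfolding w_def ..
    qed
  qed
  have "(\<Sum>y\<in>H. Kt t x y * w y) \<le> exp (- L * t) * exp (L * t * (1 - r2 / L)) * w x"
  proof (rule Kt_upper[of D, OF _ _ q hw t])
    fix x' z assume "x' \<in> D" "z \<in> H" "z \<notin> D"
    hence "z = (N,1)" "x' \<in> H" "x' \<noteq> (N,1)" unfolding D_def by auto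
    thus "P x' z = 0" using P_N1 by simp
  qed (use x in \<open>auto simp: D_def\<close>)
  also have "\<dots> = exp (- r2 * t) * w x" unfolding exp_rate ..
  also have "\<dots> \<le> exp (- r2 * t) * C2"
  proof (rule mult_left_mono)
    show "w x \<le> C2" unfolding w_def C2_def by (rule power_increasing[OF phi_le[OF x(1)] M2_ge])
  qed simp
  finally have S: "(\<Sum>y\<in>H. Kt t x y * w y) \<le> exp (- r2 * t) * C2" .
  have "Kt t x y \<le> Kt t x y * w y"
  proof -
    have "1 \<le> w y" unfolding w_def using M2_ge by simp
    thus ?thesis using Kt_nonneg[OF t x(1), of y] by (metis mult_left_mono mult.right_neutral)
  qed
  also have "\<dots> \<le> (\<Sum>y\<in>H. Kt t x y * w y)"
    by (rule member_le_sum) (use y finH Kt_nonneg[OF t x(1)] M2_ge in \<open>auto simp: w_def\<close>)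
  finally show ?thesis using S by simp
qed

lemma N1_limit:
  assumes y: "y \<in> H"
  shows "((\<lambda>t. cond_prob N b m (dirac_at (N,1)) t {y}) \<longlongrightarrow> nu y) at_top"
proof -
  define n0 where "n0 = nu (N,1)"
  have n0: "0 < n0" unfolding n0_def by (rule nu_pos[OF mb N1_H])
  define dd where "dd x = dirac_at (N,1) x - nu x / n0" for x
  have ddN1: "dd (N,1) = 0" unfolding dd_def dirac_at_def n0_def using n0 n0_def by simp
  define Cd where "Cd = (\<Sum>x\<in>H. \<bar>dd x\<bar>) * C2"
  define F where "F t z = exp (th0 * t) * Kt t (N,1) z" for t z
  have ev: "\<And>z. z \<in> H \<Longrightarrow> (\<Sum>x\<in>H. nu x * P x z) = (1 - th0 / L) * nu z" by (rule nu_eigen[OF mb])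
  have decomp: "\<bar>F t z - nu z / n0\<bar> \<le> Cd * exp (- (r2 - th0) * t)" if t: "0 \<le> t" and z: "z \<in> H" for t z
  proof -
    have k: "Kt t (N,1) z = (\<Sum>x\<in>H. dirac_at (N,1) x * Kt t x z)"
      unfolding dirac_at_def using finH N1_H by (simp add: if_distrib[of "\<lambda>u. u * _"] cong: if_cong)
    also have "\<dots> = (\<Sum>x\<in>H. nu x * Kt t x z) / n0 + (\<Sum>x\<in>H. dd x * Kt t x z)"
      unfolding dd_def by (simp add: left_diff_distrib sum_subtractf sum_divide_distrib)
    also have "(\<Sum>x\<in>H. nu x * Kt t x z) = exp (- th0 * t) * nu z"
      using Kt_left_eigen[OF ev z t] unfolding exp_rate .
    finally have "F t z = nu z / n0 + exp (th0 * t) * (\<Sum>x\<in>H. dd x * Kt t x z)"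
      unfolding F_def by (simp add: algebra_simps exp_minus field_simps)
    hence "\<bar>F t z - nu z / n0\<bar> = exp (th0 * t) * \<bar>\<Sum>x\<in>H. dd x * Kt t x z\<bar>" by (simp add: abs_mult)
    also have "\<bar>\<Sum>x\<in>H. dd x * Kt t x z\<bar> \<le> (\<Sum>x\<in>H. \<bar>dd x\<bar> * (exp (- r2 * t) * C2))"
    proof -
      have "\<bar>\<Sum>x\<in>H. dd x * Kt t x z\<bar> \<le> (\<Sum>x\<in>H. \<bar>dd x * Kt t x z\<bar>)" by (rule sum_abs)
      also have "\<dots> \<le> (\<Sum>x\<in>H. \<bar>dd x\<bar> * (exp (- r2 * t) * C2))"
      proof (rule sum_mono)
        fix x assume x: "x \<in> H"
        show "\<bar>dd x * Kt t x z\<bar> \<le> \<bar>dd x\<bar> * (exp (- r2 * t) * C2)"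
        proof (cases "x = (N,1)")
          case True thus ?thesis using ddN1 by simp
        next
          case False
          have "\<bar>Kt t x z\<bar> \<le> exp (- r2 * t) * C2" using KtD[OF t x False, of z] Kt_nonneg[OF t x, of z] by simp
          thus ?thesis by (simp add: abs_mult mult_left_mono)
        qed
      qed
      finally show ?thesis .
    qed
    hence "exp (th0 * t) * \<bar>\<Sum>x\<in>H. dd x * Kt t x z\<bar> \<le> exp (th0 * t) * (\<Sum>x\<in>H. \<bar>dd x\<bar> * (exp (- r2 * t) * C2))"
      by (simp add: mult_left_mono)
    also have "\<dots> = Cd * (exp (th0 * t) * exp (- r2 * t))"
      unfolding Cd_def by (simp add: sum_distrib_right[symmetric] ac_simps)
    also have "exp (th0 * t) * exp (- r2 * t) = exp (- (r2 - th0) * t)" by (simp add: exp_add[symmetric] algebra_simps)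
    finally show ?thesis .
  qed
  have cpos: "0 < r2 - th0" unfolding r2_def using th0_lt by simp
  have Flim: "((\<lambda>t. F t z) \<longlongrightarrow> nu z / n0) at_top" if z: "z \<in> H" for z
  proof (rule tendsto_sandwich[of "\<lambda>t. nu z / n0 - Cd * exp (- (r2 - th0) * t)" _ _ "\<lambda>t. nu z / n0 + Cd * exp (- (r2 - th0) * t)"])
    have l: "((\<lambda>t. Cd * exp (- (r2 - th0) * t)) \<longlongrightarrow> 0) at_top"
      using tendsto_mult[OF tendsto_const exp_decay[OF cpos], of Cd] by simp
    show "((\<lambda>t. nu z / n0 - Cd * exp (- (r2 - th0) * t)) \<longlongrightarrow> nu z / n0) at_top"
      using tendsto_diff[OF tendsto_const l, of "nu z / n0"] by simp
    show "((\<lambda>t. nu z / n0 + Cd * exp (- (r2 - th0) * t)) \<longlongrightarrow> nu z / n0) at_top"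
      using tendsto_add[OF tendsto_const l, of "nu z / n0"] by simp
    show "eventually (\<lambda>t. nu z / n0 - Cd * exp (- (r2 - th0) * t) \<le> F t z) at_top"
    proof (rule eventually_mono[OF eventually_ge_at_top[of 0]])
      fix t :: real assume "0 \<le> t"
      from decomp[OF this z] show "nu z / n0 - Cd * exp (- (r2 - th0) * t) \<le> F t z" by (simp only: abs_le_iff) linarith
    qed
    show "eventually (\<lambda>t. F t z \<le> nu z / n0 + Cd * exp (- (r2 - th0) * t)) at_top"
    proof (rule eventually_mono[OF eventually_ge_at_top[of 0]])
      fix t :: real assume "0 \<le> t"
      from decomp[OF this z] show "F t z \<le> nu z / n0 + Cd * exp (- (r2 - th0) * t)" by (simp only: abs_le_iff) linarith
    qed
  qed
  have Slim: "((\<lambda>t. \<Sum>z\<in>H. F t z) \<longlongrightarrow> (\<Sum>z\<in>H. nu z / n0)) at_top"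
    by (rule tendsto_sum) (rule Flim)
  have snu: "(\<Sum>z\<in>H. nu z / n0) = 1 / n0" using nu_prob[OF mb] unfolding prob_on_def
    by (simp add: sum_divide_distrib[symmetric])
  have lim: "((\<lambda>t. F t y / (\<Sum>z\<in>H. F t z)) \<longlongrightarrow> (nu y / n0) / (1 / n0)) at_top"
    by (rule tendsto_divide[OF Flim[OF y] Slim[unfolded snu]]) (use n0 in simp)
  have eq: "cond_prob N b m (dirac_at (N,1)) t {y} = F t y / (\<Sum>z\<in>H. F t z)" for t
  proof -
    have sv: "surv_prob N b m (dirac_at (N,1)) t A = (\<Sum>z\<in>A. Kt t (N,1) z)" for A
      unfolding surv_prob_def dirac_at_def using finH N1_H
      by (simp add: if_distrib[of "\<lambda>u. u * _"] cong: if_cong)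
    show ?thesis unfolding cond_prob_def sv F_def
      by (simp add: sum_distrib_left[symmetric])
  qed
  show ?thesis unfolding eq using lim n0 by simp
qed

end

end

theorem mainTheorem7:
  fixes N :: nat and \<beta> \<mu> :: real
  assumes "1 \<le> N" and "0 < \<beta>" and "0 < \<mu>"
  shows "((\<exists>\<nu>. is_QSD N \<beta> \<mu> \<nu> \<and> \<nu> (N, 1) > 0) \<longleftrightarrow> \<mu> > \<beta> * real N)
    \<and> (\<mu> > \<beta> * real N \<longrightarrow>
         (\<exists>\<nu>. is_QSD N \<beta> \<mu> \<nu> \<and> \<nu> (N, 1) > 0
              \<and> (\<forall>\<nu>'. is_QSD N \<beta> \<mu> \<nu>' \<and> \<nu>' (N, 1) > 0 \<longrightarrow> \<nu>' = \<nu>)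
              \<and> (\<forall>x\<in>SIR_hat N. \<nu> x > 0)
              \<and> (\<forall>y\<in>SIR_hat N.
                   ((\<lambda>t. cond_prob N \<beta> \<mu> (dirac_at (N, 1)) t {y}) \<longlongrightarrow> \<nu> y) at_top)))
    \<and> (\<forall>\<rho>. prob_on N \<rho> \<and> \<rho> (N, 1) = 0 \<longrightarrow>
         (\<forall>y\<in>SIR_hat N.
            ((\<lambda>t. cond_prob N \<beta> \<mu> \<rho> t {y}) \<longlongrightarrow> dirac_at (0, 2) y) at_top))"
proof -
  interpret sir N \<beta> \<mu> using assms by unfold_locales
  have part1: "(\<exists>\<nu>. is_QSD N \<beta> \<mu> \<nu> \<and> \<nu> (N, 1) > 0) \<longleftrightarrow> \<mu> > \<beta> * real N"
  proof
    assume "\<exists>\<nu>. is_QSD N \<beta> \<mu> \<nu> \<and> \<nu> (N, 1) > 0"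
    then obtain v where "is_QSD N \<beta> \<mu> v" "v (N,1) > 0" by blast
    thus "\<mu> > \<beta> * real N" using qsd_necessary by blast
  next
    assume mb: "\<mu> > \<beta> * real N"
    have "is_QSD N \<beta> \<mu> nu" by (rule eigen_QSD[OF nu_prob[OF mb] nu_eigen[OF mb]])
    moreover have "nu (N,1) > 0" by (rule nu_pos[OF mb N1_H])
    ultimately show "\<exists>\<nu>. is_QSD N \<beta> \<mu> \<nu> \<and> \<nu> (N, 1) > 0" by blast
  qed
  have part2: "\<exists>\<nu>. is_QSD N \<beta> \<mu> \<nu> \<and> \<nu> (N, 1) > 0
              \<and> (\<forall>\<nu>'. is_QSD N \<beta> \<mu> \<nu>' \<and> \<nu>' (N, 1) > 0 \<longrightarrow> \<nu>' = \<nu>)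
              \<and> (\<forall>x\<in>SIR_hat N. \<nu> x > 0)
              \<and> (\<forall>y\<in>SIR_hat N.
                   ((\<lambda>t. cond_prob N \<beta> \<mu> (dirac_at (N, 1)) t {y}) \<longlongrightarrow> \<nu> y) at_top)"
    if mb: "\<mu> > \<beta> * real N"
  proof (intro exI conjI allI impI ballI)
    show "is_QSD N \<beta> \<mu> nu" by (rule eigen_QSD[OF nu_prob[OF mb] nu_eigen[OF mb]])
    show "nu (N,1) > 0" by (rule nu_pos[OF mb N1_H])
    show "\<And>x. x \<in> SIR_hat N \<Longrightarrow> nu x > 0" by (rule nu_pos[OF mb])
    show "\<And>y. y \<in> SIR_hat N \<Longrightarrow> ((\<lambda>t. cond_prob N \<beta> \<mu> (dirac_at (N, 1)) t {y}) \<longlongrightarrow> nu y) at_top"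
      by (rule N1_limit[OF mb])
    fix v assume a: "is_QSD N \<beta> \<mu> v \<and> v (N, 1) > 0"
    hence Q: "is_QSD N \<beta> \<mu> v" and pos: "v (N,1) > 0" by auto
    have e: "\<And>y. v y = v (N,1) * hv y" using qsd_unique_hv[OF Q pos] .
    have "sum v H = 1" using Q unfolding is_QSD_def prob_on_def by simp
    moreover have "sum v H = (\<Sum>z\<in>H. v (N,1) * hv z)" by (intro sum.cong refl e)
    ultimately have "v (N,1) * (\<Sum>z\<in>H. hv z) = 1" by (simp add: sum_distrib_left)
    hence vN: "v (N,1) = 1 / (\<Sum>z\<in>H. hv z)" using hvsum_pos[OF mb] by (simp add: field_simps)
    show "v = nu"
    proof
      fix y show "v y = nu y" using e[of y] unfolding vN nu_def by simp
    qed
  qed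
  have part3: "\<forall>\<rho>. prob_on N \<rho> \<and> \<rho> (N, 1) = 0 \<longrightarrow>
         (\<forall>y\<in>SIR_hat N.
            ((\<lambda>t. cond_prob N \<beta> \<mu> \<rho> t {y}) \<longlongrightarrow> dirac_at (0, 2) y) at_top)"
    using rho_limit by blast
  show ?thesis using part1 part2 part3 by blast
qed

end
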